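(* Let $M\ge1$ and $\mathbf a\in\mathcal A_M$. Then $\mathbf a$ has a unique decomposition into irreducible words. That is, there exist a unique $k\in\mathbb N$ and a unique $k$-tuple $(\mathbf c_1,\dots,\mathbf c_k)$ with the following properties: - $\mathbf c_1\in\mathcal A_M$; - $\mathbf c_2,\dots,\mathbf c_k\in\mathcal A_1$; - each $\mathbf c_i$ is irreducible; - $\mathbf a=\mathbf c_1\circ\mathbf c_2\circ\cdots\circ\mathbf c_k$.
   Context: Order and word operations. Words over $\{0,\dots,M\}$ are ordered lexicographically, with $\mathbf c\prec\mathbf d$ iff $\mathbf c0^\infty\prec\mathbf d0^\infty$. For a word $c_1\dots c_k$: - if $c_k<M$, then $c_1\dots c_k^+=c_1\dots c_{k-1}(c_k+1)$; - $\overline{c_1\dots c_k}=(M-c_1)\dots(M-c_k)$. Fundamental words. A word $a_1\dots a_m$ ($m\ge2$) is fundamental if $\overline{a_1\dots a_{m-i}}\preceq a_{i+1}\dots a_m\prec a_1\dots a_{m-i}$ for $1\le i<m$. When $M\ge2$, a letter $a_1$ is fundamental if $M-a_1\le a_1<M$. $\mathcal A_M$ is the set of fundamental words, and $\mathcal A_1$ is the case $M=1$ (such words begin with $1$). The graph. For $\mathbf a\in\mathcal A_M$, let $G$ have vertices Start, $A$, $B$ and edges - $e_0$: Start$\to A$, - $e_1$: $A\to B$, - $e_2$: $B\to B$, - $e_3$: $B\to A$, - $e_4$: $A\to A$. It carries two labelings: - $\mathcal L_{\mathbf a}$: $e_0,e_3\mapsto\mathbf a^+$; $e_1\mapsto\overline{\mathbf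 a^+}$; $e_2\mapsto\mathbf a$; $e_4\mapsto\overline{\mathbf a}$; - $\mathcal L^*$: $e_0,e_3,e_4\mapsto1$; $e_1,e_2\mapsto0$. Composition. For a path $e_{i_1}\dots e_{i_k}$ with $i_1=0$, let $\Phi_{\mathbf a}$ map $\mathcal L_{\mathbf a}(e_{i_1})\cdots\mathcal L_{\mathbf a}(e_{i_k})$ to $\mathcal L^*(e_{i_1}\dots e_{i_k})$. For $\mathbf b\in\mathcal A_1$, $\mathbf a\circ\mathbf b:=\Phi_{\mathbf a}^{-1}(\mathbf b)$, which lies again in $\mathcal A_M$. Iterated compositions $\mathbf c_1\circ\cdots\circ\mathbf c_k$ are formed successively; any bracketing yields the same word. Irreducibility. A word $\mathbf a\in\mathcal A_M$ is irreducible if there do not exist $\mathbf c\in\mathcal A_M$ and $\mathbf d\in\mathcal A_1$ with $\mathbf a=\mathbf c\circ\mathbf d$. For words in $\mathcal A_1$, this is with $M=1$. *)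

theory Defs
  imports Main
begin

text \<open>Infinite extension c 0^infinity of a finite word.\<close>
definition pad0 :: "nat list \<Rightarrow> nat \<Rightarrow> nat" where
  "pad0 c i = (if i < length c then c ! i else 0)"

definition lex_less :: "nat list \<Rightarrow> nat list \<Rightarrow> bool" where
  "lex_less c d \<longleftrightarrow> (\<exists>n. (\<forall>i<n. pad0 c i = pad0 d i) \<and> pad0 c n < pad0 d n)"

definition lex_le :: "nat list \<Rightarrow> nat list \<Rightarrow> bool" where
  "lex_le c d \<longleftrightarrow> lex_less c d \<or> pad0 c = pad0 d"

text \<open>c_1...c_k^+ = c_1...c_{k-1}(c_k+1) (used only when c_k < M).\<close>
definition wplus :: "nat list \<Rightarrow> nat list" where
  "wplus c = butlast c @ [last c + 1]"

definition wbar :: "nat \<Rightarrow> nat list \<Rightarrow> nat list" where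
  "wbar M c = map (\<lambda>x. M - x) c"

definition fundamental :: "nat \<Rightarrow> nat list \<Rightarrow> bool" where
  "fundamental M a \<longleftrightarrow>
     set a \<subseteq> {0..M} \<and>
     ((length a = 1 \<and> 2 \<le> M \<and> M - a ! 0 \<le> a ! 0 \<and> a ! 0 < M) \<or>
      (2 \<le> length a \<and>
       (\<forall>i. 1 \<le> i \<and> i < length a \<longrightarrow>
          lex_le (wbar M (take (length a - i) a)) (drop i a) \<and>
          lex_less (drop i a) (take (length a - i) a))))"

datatype vertex = VStart | VA | VB
datatype edge = E0 | E1 | E2 | E3 | E4

fun esrc :: "edge \<Rightarrow> vertex" where
  "esrc E0 = VStart" | "esrc E1 = VA" | "esrc E2 = VB" | "esrc E3 = VB" | "esrc E4 = VA"

fun etgt :: "edge \<Rightarrow> vertex" where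
  "etgt E0 = VA" | "etgt E1 = VB" | "etgt E2 = VB" | "etgt E3 = VA" | "etgt E4 = VA"

definition gpath :: "edge list \<Rightarrow> bool" where
  "gpath p \<longleftrightarrow> p \<noteq> [] \<and> hd p = E0 \<and>
     (\<forall>j. Suc j < length p \<longrightarrow> etgt (p ! j) = esrc (p ! Suc j))"

fun lab_a :: "nat \<Rightarrow> nat list \<Rightarrow> edge \<Rightarrow> nat list" where
  "lab_a M a E0 = wplus a"
| "lab_a M a E3 = wplus a"
| "lab_a M a E1 = wbar M (wplus a)"
| "lab_a M a E2 = a"
| "lab_a M a E4 = wbar M a"

fun lab_star :: "edge \<Rightarrow> nat" where
  "lab_star E0 = 1" | "lab_star E3 = 1" | "lab_star E4 = 1"
| "lab_star E1 = 0" | "lab_star E2 = 0"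

text \<open>a \<circ> b := Phi_a^{-1}(b): the L_a-label of the path whose L^*-label is b.\<close>
definition comp :: "nat \<Rightarrow> nat list \<Rightarrow> nat list \<Rightarrow> nat list" where
  "comp M a b = concat (map (lab_a M a) (THE p. gpath p \<and> map lab_star p = b))"

definition comp_iter :: "nat \<Rightarrow> nat list \<Rightarrow> nat list list \<Rightarrow> nat list" where
  "comp_iter M c cs = foldl (comp M) c cs"

definition irreducible_word :: "nat \<Rightarrow> nat list \<Rightarrow> bool" where
  "irreducible_word M a \<longleftrightarrow> fundamental M a \<and>
     \<not> (\<exists>c d. fundamental M c \<and> fundamental 1 d \<and> a = comp M c d)"

end

theory Submission
  imports Defs "HOL-Library.List_Lexorder"
begin

lemma pad0_Cons_0 [simp]: "pad0 (x # c) 0 = x"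
  by (simp add: pad0_def)

lemma pad0_Cons_Suc [simp]: "pad0 (x # c) (Suc i) = pad0 c i"
  by (simp add: pad0_def)

lemma pad0_Nil [simp]: "pad0 [] i = 0"
  by (simp add: pad0_def)

lemma lex_less_Cons:
  "lex_less (x # c) (y # d) \<longleftrightarrow> x < y \<or> (x = y \<and> lex_less c d)"
proof
  assume "lex_less (x # c) (y # d)"
  then obtain n where n: "\<forall>i<n. pad0 (x # c) i = pad0 (y # d) i" "pad0 (x # c) n < pad0 (y # d) n"
    unfolding lex_less_def by blast
  show "x < y \<or> (x = y \<and> lex_less c d)"
  proof (cases n)
    case 0 then show ?thesis using n by simp
  next
    case (Suc k)
    have "x = y" using n(1) Suc by (metis pad0_Cons_0 zero_less_Suc)
    moreover have "lex_less c d" unfolding lex_less_def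
      using n Suc by (intro exI[of _ k]) auto
    ultimately show ?thesis by simp
  qed
next
  assume "x < y \<or> (x = y \<and> lex_less c d)"
  then show "lex_less (x # c) (y # d)"
  proof
    assume "x < y" then show ?thesis unfolding lex_less_def by (intro exI[of _ 0]) simp
  next
    assume "x = y \<and> lex_less c d"
    then obtain n where n: "\<forall>i<n. pad0 c i = pad0 d i" "pad0 c n < pad0 d n" "x = y"
      unfolding lex_less_def by blast
    show ?thesis unfolding lex_less_def
    proof (intro exI[of _ "Suc n"] conjI allI impI)
      fix i assume "i < Suc n" then show "pad0 (x # c) i = pad0 (y # d) i"
        using n by (cases i) auto
    qed (use n in simp)
  qed
qed

lemma lex_less_Nil: "\<not> lex_less [] []"
  by (simp add: lex_less_def)

lemma lex_less_iff: "length c = length d \<Longrightarrow> lex_less c d \<longleftrightarrow> c < d"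
  by (induction c d rule: list_induct2) (auto simp: lex_less_Cons lex_less_Nil)

lemma pad0_eq_iff: "length c = length d \<Longrightarrow> pad0 c = pad0 d \<longleftrightarrow> c = d"
proof
  assume l: "length c = length d" and p: "pad0 c = pad0 d"
  show "c = d"
  proof (rule nth_equalityI)
    fix i assume "i < length c"
    then show "c ! i = d ! i" using fun_cong[OF p, of i] l by (simp add: pad0_def)
  qed (use l in simp)
qed simp

lemma lex_le_iff: "length c = length d \<Longrightarrow> lex_le c d \<longleftrightarrow> c \<le> d"
  by (simp add: lex_le_def lex_less_iff pad0_eq_iff order_le_less)

lemma append_less_iff:
  fixes x1 y1 x2 y2 :: "nat list"
  shows "length x1 = length y1 \<Longrightarrow> x1 @ x2 < y1 @ y2 \<longleftrightarrow> x1 < y1 \<or> (x1 = y1 \<and> x2 < y2)"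
  by (induction x1 y1 rule: list_induct2) auto

lemma append_le_iff:
  fixes x1 y1 x2 y2 :: "nat list"
  shows "length x1 = length y1 \<Longrightarrow> x1 @ x2 \<le> y1 @ y2 \<longleftrightarrow> x1 < y1 \<or> (x1 = y1 \<and> x2 \<le> y2)"
  by (induction x1 y1 rule: list_induct2) auto

lemma append_lessI:
  fixes x1 y1 x2 y2 :: "nat list"
  shows "length x1 = length y1 \<Longrightarrow> x1 < y1 \<Longrightarrow> x1 @ x2 < y1 @ y2"
  by (simp add: append_less_iff)

lemma take_less_imp:
  fixes x y :: "nat list"
  assumes "k \<le> length x" "k \<le> length y" "take k x < take k y"
  shows "x < y"
proof -
  have "take k x @ drop k x < take k y @ drop k y"
    using assms by (intro append_lessI) auto
  then show ?thesis by simp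
qed

lemma hd_less_imp:
  fixes x y :: "nat list"
  assumes "x \<noteq> []" "y \<noteq> []" "hd x < hd y"
  shows "x < y"
  using assms by (cases x; cases y) auto

lemma take_le_mono:
  fixes x y :: "nat list"
  assumes "length x = length y" "x \<le> y"
  shows "take k x \<le> take k y"
proof -
  have "take k x @ drop k x \<le> take k y @ drop k y" using assms by simp
  then show ?thesis using assms(1)
    by (subst (asm) append_le_iff) (auto simp: order_le_less)
qed

lemma wbar_length [simp]: "length (wbar M x) = length x"
  by (simp add: wbar_def)

lemma wbar_append [simp]: "wbar M (x @ y) = wbar M x @ wbar M y"
  by (simp add: wbar_def)

lemma wbar_take: "wbar M (take k x) = take k (wbar M x)"
  by (simp add: wbar_def take_map)

lemma wbar_drop: "wbar M (drop k x) = drop k (wbar M x)"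
  by (simp add: wbar_def drop_map)

lemma wbar_Cons [simp]: "wbar M (a # x) = (M - a) # wbar M x"
  by (simp add: wbar_def)

lemma wbar_Nil [simp]: "wbar M [] = []"
  by (simp add: wbar_def)

lemma wbar_wbar: "set x \<subseteq> {0..M} \<Longrightarrow> wbar M (wbar M x) = x"
  by (induction x) auto

lemma wbar_set: "set (wbar M x) \<subseteq> {0..M}"
  by (auto simp: wbar_def)

lemma wbar_less_iff:
  "length x = length y \<Longrightarrow> set x \<subseteq> {0..M} \<Longrightarrow> set y \<subseteq> {0..M} \<Longrightarrow>
    wbar M x < wbar M y \<longleftrightarrow> y < x"
  by (induction x y rule: list_induct2) auto

lemma wbar_le_iff:
  "length x = length y \<Longrightarrow> set x \<subseteq> {0..M} \<Longrightarrow> set y \<subseteq> {0..M} \<Longrightarrow>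
    wbar M x \<le> wbar M y \<longleftrightarrow> y \<le> x"
  by (induction x y rule: list_induct2) auto

lemma wplus_snoc [simp]: "wplus (xs @ [a]) = xs @ [a + 1]"
  by (simp add: wplus_def)

lemma wplus_length [simp]: "x \<noteq> [] \<Longrightarrow> length (wplus x) = length x"
  by (cases x rule: rev_cases) auto

lemma wplus_ne: "x \<noteq> [] \<Longrightarrow> wplus x \<noteq> []"
  by (simp add: wplus_def)

lemma less_wplus: "x \<noteq> [] \<Longrightarrow> x < (wplus x :: nat list)"
  by (cases x rule: rev_cases) (auto simp: append_less_iff)

lemma wplus_le: 
  fixes x y :: "nat list"
  assumes "length x = length y" "x < y"
  shows "wplus x \<le> y"
proof (cases x rule: rev_cases)
  case Nil then show ?thesis using assms by simp
next
  case (snoc xs a)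
  then obtain ys b where y: "y = ys @ [b]" using assms(1)
    by (cases y rule: rev_cases) auto
  have l: "length xs = length ys" using assms(1) snoc y by simp
  have "xs < ys \<or> xs = ys \<and> a < b" using assms(2) snoc y l by (simp add: append_less_iff)
  then show ?thesis using snoc y l by (auto simp: append_le_iff)
qed

lemma wplus_inj:
  assumes "length x = length y" "x \<noteq> []" "wplus x = wplus y"
  shows "x = y"
proof -
  obtain xs a where x: "x = xs @ [a]" using assms(2) by (cases x rule: rev_cases) auto
  obtain ys b where y: "y = ys @ [b]" using assms(1,2) by (cases y rule: rev_cases) auto
  show ?thesis using assms(3) x y by simp
qed

lemma take_wplus: "k < length x \<Longrightarrow> take k (wplus x) = take k x"
  by (cases x rule: rev_cases) auto

lemma drop_wplus: "k < length x \<Longrightarrow> drop k (wplus x) = wplus (drop k x)"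
  by (cases x rule: rev_cases) (auto simp: wplus_def)

lemma hd_wplus: "x \<noteq> [] \<Longrightarrow> hd (wplus x) = (if length x = 1 then hd x + 1 else hd x)"
proof (cases x rule: rev_cases)
  case (snoc xs a)
  then show ?thesis by (cases xs) (auto simp: wplus_def)
qed simp

lemma wplus_set: "x \<noteq> [] \<Longrightarrow> set x \<subseteq> {0..M} \<Longrightarrow> last x < M \<Longrightarrow> set (wplus x) \<subseteq> {0..M}"
  by (cases x rule: rev_cases) auto

lemma last_wplus: "x \<noteq> [] \<Longrightarrow> last (wplus x) = last x + 1"
  by (cases x rule: rev_cases) auto

lemma butlast_wplus: "butlast (wplus x) = butlast x"
  by (cases x rule: rev_cases) (auto simp: wplus_def)

lemma fundamental_iff2:
  "fundamental M a \<longleftrightarrow> set a \<subseteq> {0..M} \<and>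
     ((length a = 1 \<and> 2 \<le> M \<and> M - a ! 0 \<le> a ! 0 \<and> a ! 0 < M) \<or>
      (2 \<le> length a \<and>
       (\<forall>i. 1 \<le> i \<and> i < length a \<longrightarrow>
          wbar M (take (length a - i) a) \<le> drop i a \<and>
          drop i a < take (length a - i) a)))"
proof -
  have "\<And>i. i < length a \<Longrightarrow>
     (lex_le (wbar M (take (length a - i) a)) (drop i a) \<and> lex_less (drop i a) (take (length a - i) a))
     \<longleftrightarrow> (wbar M (take (length a - i) a) \<le> drop i a \<and> drop i a < take (length a - i) a)"
    by (simp add: lex_le_iff lex_less_iff)
  then show ?thesis unfolding fundamental_def by (metis (no_types, lifting))
qed

lemma fund_set: "fundamental M a \<Longrightarrow> set a \<subseteq> {0..M}"
  by (simp add: fundamental_def)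

lemma fund_ne: "fundamental M a \<Longrightarrow> a \<noteq> []"
  by (auto simp: fundamental_def)

lemma fund_cond:
  assumes "fundamental M a" "1 \<le> i" "i < length a"
  shows "wbar M (take (length a - i) a) \<le> drop i a" "drop i a < take (length a - i) a"
  using assms by (auto simp: fundamental_iff2)

lemma fund_cond':
  assumes "fundamental M a" "1 \<le> i" "i < length a"
  shows "wbar M (drop i a) \<le> take (length a - i) a"
proof -
  have s: "set a \<subseteq> {0..M}" using assms fund_set by blast
  have "wbar M (take (length a - i) a) \<le> drop i a" using fund_cond assms by blast
  then have "wbar M (drop i a) \<le> wbar M (wbar M (take (length a - i) a))"
    using s by (subst wbar_le_iff) (auto simp: wbar_set dest: in_set_takeD in_set_dropD)
  also have "\<dots> = take (length a - i) a" using s by (intro wbar_wbar) (auto dest: in_set_takeD)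
  finally show ?thesis .
qed

lemma fund_last_hd:
  assumes "fundamental M a" "2 \<le> length a"
  shows "M - hd a \<le> last a" "last a < hd a"
proof -
  let ?i = "length a - 1"
  have d: "drop ?i a = [last a]" using assms(2)
    by (cases a rule: rev_cases) auto
  have t: "take (length a - ?i) a = [hd a]" using assms(2)
    by (cases a) auto
  have i: "1 \<le> ?i" "?i < length a" using assms(2) by auto
  show "M - hd a \<le> last a" "last a < hd a"
    using fund_cond[OF assms(1) i] d t by auto
qed

lemma fund_props:
  assumes "fundamental M a"
  shows "a \<noteq> []" "last a < M" "hd a \<le> M" "M - hd a \<le> hd a"
    "2 \<le> length a \<Longrightarrow> M - hd a < hd a" "set a \<subseteq> {0..M}"
proof -
  show ne: "a \<noteq> []" using fund_ne assms by blast
  show s: "set a \<subseteq> {0..M}" using fund_set assms by blast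
  show h: "hd a \<le> M" using s ne by (cases a) auto
  show "2 \<le> length a \<Longrightarrow> M - hd a < hd a" using fund_last_hd[OF assms] by linarith
  show "M - hd a \<le> hd a"
  proof (cases "length a = 1")
    case True then show ?thesis using assms by (cases a) (auto simp: fundamental_def)
  next
    case False
    moreover have "length a \<noteq> 0" using ne by simp
    ultimately have "2 \<le> length a" by linarith
    then show ?thesis using fund_last_hd[OF assms] by linarith
  qed
  show "last a < M"
  proof (cases "length a = 1")
    case True then show ?thesis using assms by (cases a) (auto simp: fundamental_def)
  next
    case False
    moreover have "length a \<noteq> 0" using ne by simp
    ultimately have "2 \<le> length a" by linarith
    then show ?thesis using fund_last_hd[OF assms] h by linarith
  qed
qed

lemma fund_hd_ineq:
  assumes "fundamental M a"
  shows "M - hd a < hd (wplus a)" "M - hd (wplus a) < hd a"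
proof -
  note p = fund_props[OF assms]
  show "M - hd a < hd (wplus a)" "M - hd (wplus a) < hd a"
  proof (atomize (full), cases "length a = 1")
    case True then show "M - hd a < hd (wplus a) \<and> M - hd (wplus a) < hd a"
      using p hd_wplus[of a] by (cases a) auto
  next
    case False
    moreover have "length a \<noteq> 0" using p(1) by simp
    ultimately have "2 \<le> length a" by linarith
    then show "M - hd a < hd (wplus a) \<and> M - hd (wplus a) < hd a"
      using p hd_wplus[of a] False by auto
  qed
qed

lemma fund1_props:
  assumes "fundamental 1 d"
  shows "set d \<subseteq> {0..1}" "2 \<le> length d" "hd d = 1" "last d = 0"
proof -
  show s: "set d \<subseteq> {0..1}" using fund_set assms by blast
  show l: "2 \<le> length d" using assms by (auto simp: fundamental_def)
  show "hd d = 1" using fund_props(3,5)[OF assms] l by linarith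
  then show "last d = 0" using fund_last_hd(2)[OF assms l] by simp
qed

section \<open>Blocks\<close>

definition blk :: "nat \<Rightarrow> nat list \<Rightarrow> nat \<Rightarrow> nat \<Rightarrow> nat list" where
  "blk M w s b = (if s = 0 then (if b = 0 then w else wplus w)
                  else (if b = 0 then wbar M (wplus w) else wbar M w))"

fun bw :: "nat \<Rightarrow> nat list \<Rightarrow> nat list \<Rightarrow> nat list" where
  "bw M w (x # y # r) = blk M w x y @ bw M w (y # r)"
| "bw M w _ = []"

lemma bw_Nil [simp]: "bw M w [] = []" and bw_single [simp]: "bw M w [x] = []"
  by simp_all

lemma blk_length [simp]: "w \<noteq> [] \<Longrightarrow> length (blk M w s b) = length w"
  by (simp add: blk_def)

lemma blk_set: "w \<noteq> [] \<Longrightarrow> set w \<subseteq> {0..M} \<Longrightarrow> last w < M \<Longrightarrow> set (blk M w s b) \<subseteq> {0..M}"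
  by (auto simp: blk_def wbar_set dest: wplus_set[of w M])

lemma bw_length: "w \<noteq> [] \<Longrightarrow> length (bw M w D) = length w * (length D - 1)"
  by (induction M w D rule: bw.induct) auto

lemma bw_set: "w \<noteq> [] \<Longrightarrow> set w \<subseteq> {0..M} \<Longrightarrow> last w < M \<Longrightarrow> set (bw M w D) \<subseteq> {0..M}"
  by (induction M w D rule: bw.induct) (auto dest: blk_set)

lemma bw_drop: "w \<noteq> [] \<Longrightarrow> drop (j * length w) (bw M w D) = bw M w (drop j D)"
proof (induction j arbitrary: D)
  case 0 then show ?case by simp
next
  case (Suc j)
  show ?case
  proof (cases D)
    case Nil then show ?thesis by simp
  next
    case (Cons x r)
    show ?thesis
    proof (cases r)
      case Nil then show ?thesis using Cons by simp
    next
      case (Cons y r')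
      have "drop (Suc j * length w) (bw M w D) = drop (j * length w) (bw M w r)"
        using \<open>D = x # r\<close> Cons Suc.prems by simp
      then show ?thesis using Suc \<open>D = x # r\<close> by simp
    qed
  qed
qed

lemma bw_take: "w \<noteq> [] \<Longrightarrow> take (j * length w) (bw M w D) = bw M w (take (Suc j) D)"
proof (induction j arbitrary: D)
  case 0 then show ?case by (cases D) auto
next
  case (Suc j)
  show ?case
  proof (cases D)
    case Nil then show ?thesis by simp
  next
    case (Cons x r)
    show ?thesis
    proof (cases r)
      case Nil then show ?thesis using Cons by simp
    next
      case (Cons y r')
      have "take (Suc j * length w) (bw M w D) = blk M w x y @ take (j * length w) (bw M w r)"
        using \<open>D = x # r\<close> Cons Suc.prems by simp
      then show ?thesis using Suc \<open>D = x # r\<close> Cons by simp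
    qed
  qed
qed

lemma bw_append: "u \<noteq> [] \<Longrightarrow> bw M w (s # u @ v) = bw M w (s # u) @ bw M w (last u # v)"
proof (induction u arbitrary: s)
  case Nil then show ?case by simp
next
  case (Cons x u)
  show ?case
  proof (cases u)
    case Nil then show ?thesis by simp
  next
    case (Cons y u')
    then show ?thesis using Cons.IH[of x] by simp
  qed
qed

lemma bw_Cons_Cons: "bw M w (s # b # r) = blk M w s b @ bw M w (b # r)"
  by simp

definition bits :: "nat list \<Rightarrow> bool" where
  "bits x \<longleftrightarrow> set x \<subseteq> {0..1}"

lemma bits_Cons [simp]: "bits (a # x) \<longleftrightarrow> a \<le> 1 \<and> bits x"
  by (auto simp: bits_def)

lemma bits_Nil [simp]: "bits []"
  by (simp add: bits_def)

lemma bits_nth: "bits d \<Longrightarrow> i < length d \<Longrightarrow> d ! i \<le> 1"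
  by (auto simp: bits_def dest!: nth_mem)

lemma bits_tl: "bits d \<Longrightarrow> bits (tl d)"
  by (cases d) auto

lemma bits_mem: "bits d \<Longrightarrow> x \<in> set d \<Longrightarrow> x \<le> 1"
  by (auto simp: bits_def)

lemma bits_append [simp]: "bits (x @ y) \<longleftrightarrow> bits x \<and> bits y"
  by (auto simp: bits_def)

lemma blk_less:
  assumes "w \<noteq> []" "set w \<subseteq> {0..M}" "last w < M"
  shows "blk M w s 0 < blk M w s 1"
proof (cases "s = 0")
  case True then show ?thesis using less_wplus[OF assms(1)] by (simp add: blk_def)
next
  case False
  have "wbar M (wplus w) < wbar M w"
    using assms less_wplus[OF assms(1)] wplus_set[OF assms(1,2,3)]
    by (subst wbar_less_iff) auto
  then show ?thesis using False by (simp add: blk_def)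
qed

lemma bw_cmp:
  assumes "w \<noteq> []" "set w \<subseteq> {0..M}" "last w < M"
  shows "length x = length y \<Longrightarrow> bits x \<Longrightarrow> bits y \<Longrightarrow>
    bw M w (s # x) < bw M w (s # y) \<longleftrightarrow> x < y"
proof (induction x y arbitrary: s rule: list_induct2)
  case Nil then show ?case by simp
next
  case (Cons a x b y)
  have IH: "bw M w (a # x) < bw M w (a # y) \<longleftrightarrow> x < y" using Cons by simp
  show ?case
  proof (cases "a = b")
    case True then show ?thesis using IH by (simp add: append_less_iff assms(1))
  next
    case False
    then have ab: "(a = 0 \<and> b = 1) \<or> (a = 1 \<and> b = 0)" using Cons.prems by auto
    then show ?thesis
    proof
      assume "a = 0 \<and> b = 1"
      then show ?thesis using blk_less[OF assms, of s] by (simp add: append_less_iff assms(1))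
    next
      assume "a = 1 \<and> b = 0"
      then show ?thesis using blk_less[OF assms, of s] by (auto simp add: append_less_iff assms(1))
    qed
  qed
qed

lemma bw_cmp_le:
  assumes "w \<noteq> []" "set w \<subseteq> {0..M}" "last w < M"
    "length x = length y" "bits x" "bits y"
  shows "bw M w (s # x) \<le> bw M w (s # y) \<longleftrightarrow> x \<le> y"
  using bw_cmp[OF assms(1,2,3), of y x s] assms(4-) by (auto simp: not_less[symmetric])

lemma bw_eq_iff:
  assumes "w \<noteq> []" "set w \<subseteq> {0..M}" "last w < M"
    "length x = length y" "bits x" "bits y"
  shows "bw M w (s # x) = bw M w (s # y) \<longleftrightarrow> x = y"
  using bw_cmp[OF assms(1,2,3), of y x s] bw_cmp[OF assms(1,2,3), of x y s] assms(4-)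
  by (metis less_irrefl linorder_neqE)

definition flip :: "nat list \<Rightarrow> nat list" where
  "flip x = map (\<lambda>b. 1 - b) x"

lemma flip_Cons [simp]: "flip (a # x) = (1 - a) # flip x"
  by (simp add: flip_def)

lemma flip_Nil [simp]: "flip [] = []"
  by (simp add: flip_def)

lemma wbar1_flip: "wbar 1 x = flip x"
  by (simp add: wbar_def flip_def)

lemma blk_bar:
  assumes "w \<noteq> []" "set w \<subseteq> {0..M}" "last w < M" "s \<le> 1" "b \<le> 1"
  shows "wbar M (blk M w s b) = blk M w (1 - s) (1 - b)"
  using assms wbar_wbar[OF assms(2)] wbar_wbar[OF wplus_set[OF assms(1,2,3)]]
  by (auto simp: blk_def)

lemma bw_bar:
  assumes "w \<noteq> []" "set w \<subseteq> {0..M}" "last w < M"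
  shows "bits D \<Longrightarrow> wbar M (bw M w D) = bw M w (flip D)"
proof (induction D rule: induct_list012)
  case (3 x y r)
  then show ?case using blk_bar[OF assms, of x y] by simp
qed simp_all

lemma blk_plus:
  assumes "w \<noteq> []" "last w < M"
  shows "wplus (blk M w s 0) = blk M w s 1"
proof (cases "s = 0")
  case True then show ?thesis by (simp add: blk_def)
next
  case False
  obtain xs a where w: "w = xs @ [a]" using assms(1) by (cases w rule: rev_cases) auto
  have "a < M" using assms w by simp
  then have "wplus (wbar M (wplus w)) = wbar M w" using w
    by (simp add: wbar_def)
  then show ?thesis using False by (simp add: blk_def)
qed

lemma bw_hd: "w \<noteq> [] \<Longrightarrow> take (length w) (bw M w (s # b # r)) = blk M w s b"
  by simp

section \<open>Composition via blocks\<close>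

fun ed :: "nat \<Rightarrow> nat \<Rightarrow> edge" where
  "ed s b = (if s = 0 then (if b = 0 then E2 else E3) else (if b = 0 then E1 else E4))"

declare ed.simps [simp del]

definition pathof :: "nat list \<Rightarrow> edge list" where
  "pathof d = E0 # map (\<lambda>(s, b). ed s b) (zip d (tl d))"

lemma pathof_length: "d \<noteq> [] \<Longrightarrow> length (pathof d) = length d"
  by (simp add: pathof_def)

lemma pathof_nth_Suc: "Suc j < length d \<Longrightarrow> pathof d ! Suc j = ed (d ! j) (d ! Suc j)"
  by (simp add: pathof_def nth_tl)

lemma pathof_nth_0: "pathof d ! 0 = E0"
  by (simp add: pathof_def)

lemma lab_star_ed: "b \<le> 1 \<Longrightarrow> lab_star (ed s b) = b"
  by (auto simp: ed.simps)

lemma esrc_ed: "esrc (ed s b) = (if s = 0 then VB else VA)"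
  by (auto simp: ed.simps)

lemma etgt_ed: "b \<le> 1 \<Longrightarrow> etgt (ed s b) = (if b = 0 then VB else VA)"
  by (auto simp: ed.simps)

lemma etgt_VA_iff: "etgt e = VA \<longleftrightarrow> lab_star e = 1"
  by (cases e) auto

lemma etgt_ne_Start: "etgt e \<noteq> VStart"
  by (cases e) auto

lemma edge_determined: "e \<noteq> E0 \<Longrightarrow> e = ed (if esrc e = VA then 1 else 0) (lab_star e)"
  by (cases e) (auto simp: ed.simps)

lemma pathof_labels:
  assumes "bits d" "d \<noteq> []" "hd d = 1"
  shows "map lab_star (pathof d) = d"
proof (rule nth_equalityI)
  show "length (map lab_star (pathof d)) = length d" using assms pathof_length by simp
next
  fix i assume "i < length (map lab_star (pathof d))"
  then have i: "i < length d" using assms pathof_length by simp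
  show "map lab_star (pathof d) ! i = d ! i"
  proof (cases i)
    case 0 then show ?thesis using assms i by (cases d) (auto simp: pathof_def)
  next
    case (Suc j)
    have "d ! i \<le> 1" using assms(1) i by (rule bits_nth)
    then show ?thesis using Suc i pathof_nth_Suc[of j d] pathof_length[OF assms(2)] lab_star_ed by simp
  qed
qed

lemma pathof_gpath:
  assumes "bits d" "d \<noteq> []" "hd d = 1"
  shows "gpath (pathof d)"
  unfolding gpath_def
proof (intro conjI allI impI)
  show "pathof d \<noteq> []" by (simp add: pathof_def)
  show "hd (pathof d) = E0" by (simp add: pathof_def)
next
  fix j assume j: "Suc j < length (pathof d)"
  then have j': "Suc j < length d" using pathof_length[OF assms(2)] by simp
  have "d ! j \<le> 1" using assms(1) j' by (intro bits_nth) auto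
  moreover have "etgt (pathof d ! j) = (if d ! j = 0 then VB else VA)"
  proof (cases j)
    case 0 then show ?thesis using assms by (cases d) (auto simp: pathof_def)
  next
    case (Suc k)
    have "d ! j \<le> 1" using assms(1) j' by (intro bits_nth) auto
    then show ?thesis using pathof_nth_Suc[of k d] j' Suc etgt_ed by auto
  qed
  ultimately show "etgt (pathof d ! j) = esrc (pathof d ! Suc j)"
    using pathof_nth_Suc[OF j'] esrc_ed by auto
qed

lemma gpath_unique:
  assumes "bits d" "d \<noteq> []" "hd d = 1" "gpath p" "map lab_star p = d"
  shows "p = pathof d"
proof (rule nth_equalityI)
  have lp: "length p = length d" using assms(5) by auto
  then show "length p = length (pathof d)" using pathof_length[OF assms(2)] by simp
  fix i assume i: "i < length p"
  show "p ! i = pathof d ! i"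
  proof (cases i)
    case 0 then show ?thesis using assms(4) by (cases p) (auto simp: gpath_def pathof_def)
  next
    case (Suc j)
    have t: "etgt (p ! j) = esrc (p ! Suc j)" using assms(4) i Suc by (auto simp: gpath_def)
    then have ne: "p ! Suc j \<noteq> E0" using etgt_ne_Start by (metis esrc.simps(1))
    have lj: "lab_star (p ! j) = d ! j" "lab_star (p ! Suc j) = d ! Suc j"
      using assms(5) i Suc by auto
    have "p ! Suc j = ed (if esrc (p ! Suc j) = VA then 1 else 0) (lab_star (p ! Suc j))"
      using edge_determined[OF ne] .
    also have "(if esrc (p ! Suc j) = VA then 1 else 0) = d ! j"
    proof -
      have "d ! j \<le> 1" using assms(1) i Suc lp by (intro bits_nth) auto
      then show ?thesis using t[symmetric] etgt_VA_iff[of "p ! j"] lj by auto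
    qed
    finally show ?thesis using Suc pathof_nth_Suc[of j d] i lp lj by simp
  qed
qed

lemma lab_a_ed: "s \<le> 1 \<Longrightarrow> b \<le> 1 \<Longrightarrow> lab_a M w (ed s b) = blk M w s b"
  by (auto simp: blk_def ed.simps)

lemma bw_concat: "bits xs \<Longrightarrow> bw M w xs = concat (map (\<lambda>(s, b). blk M w s b) (zip xs (tl xs)))"
  by (induction M w xs rule: bw.induct) auto

lemma concat_lab:
  assumes "bits d"
  shows "concat (map (lab_a M w) (map (\<lambda>(s, b). ed s b) (zip d (tl d)))) =
         concat (map (\<lambda>(s, b). blk M w s b) (zip d (tl d)))"
proof -
  have "\<And>s b. (s, b) \<in> set (zip d (tl d)) \<Longrightarrow> lab_a M w (ed s b) = blk M w s b"
  proof -
    fix s b assume "(s, b) \<in> set (zip d (tl d))"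
    then have "s \<in> set d" "b \<in> set (tl d)" by (auto dest: set_zip_leftD set_zip_rightD)
    then show "lab_a M w (ed s b) = blk M w s b"
      using assms bits_tl[OF assms] bits_mem lab_a_ed by blast
  qed
  then show ?thesis by (auto intro!: arg_cong[where f = concat])
qed

lemma comp_eq:
  assumes "bits d" "d \<noteq> []" "hd d = 1"
  shows "comp M w d = bw M w (0 # d)"
proof -
  have the: "(THE p. gpath p \<and> map lab_star p = d) = pathof d"
  proof (rule the_equality)
    show "gpath (pathof d) \<and> map lab_star (pathof d) = d"
      using pathof_gpath[OF assms] pathof_labels[OF assms] by blast
  next
    fix p assume "gpath p \<and> map lab_star p = d"
    then show "p = pathof d" using gpath_unique[OF assms] by blast
  qed
  obtain r where d: "d = 1 # r" using assms by (cases d) auto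
  have "comp M w d = concat (map (lab_a M w) (pathof d))"
    unfolding comp_def the ..
  also have "\<dots> = lab_a M w E0 @ concat (map (lab_a M w) (map (\<lambda>(s, b). ed s b) (zip d (tl d))))"
    unfolding pathof_def by simp
  also have "\<dots> = wplus w @ concat (map (\<lambda>(s, b). blk M w s b) (zip d (tl d)))"
    using concat_lab[OF assms(1), of M w] by simp
  also have "\<dots> = bw M w (0 # d)"
  proof -
    have "bw M w (0 # d) = blk M w 0 1 @ bw M w d" using d by simp
    moreover have "blk M w 0 1 = wplus w" by (simp add: blk_def)
    ultimately show ?thesis using bw_concat[OF assms(1), of M w] by simp
  qed
  finally show ?thesis .
qed

lemma bw_drop_Cons:
  "j + 1 < length D \<Longrightarrow> bw M w (drop j D) = blk M w (D ! j) (D ! (j + 1)) @ bw M w (drop (j + 1) D)"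
proof -
  assume j: "j + 1 < length D"
  have "drop j D = D ! j # D ! (j + 1) # drop (j + 2) D"
    using j by (metis Cons_nth_drop_Suc Suc_eq_plus1 Suc_lessD add_2_eq_Suc')
  moreover have "drop (j + 1) D = D ! (j + 1) # drop (j + 2) D"
    using j by (metis Cons_nth_drop_Suc Suc_eq_plus1 add_2_eq_Suc')
  ultimately show ?thesis by simp
qed

lemma wbar_wplus_less:
  assumes "u \<noteq> []" "set u \<subseteq> {0..M}" "last u < M"
  shows "wbar M (wplus u) < wbar M u"
  using assms less_wplus[OF assms(1)] wplus_set[OF assms]
  by (subst wbar_less_iff) auto

context
  fixes M :: nat and w :: "nat list" and r :: nat
  assumes w: "fundamental M w" and r: "0 < r" "r < length w"
begin

private lemma ws: "set w \<subseteq> {0..M}" "w \<noteq> []" "last w < M"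
  using fund_props[OF w] by auto

private lemma dr: "drop r w \<noteq> []" "set (drop r w) \<subseteq> {0..M}" "last (drop r w) < M"
  using ws r by (auto dest: in_set_dropD)

private lemma dqr: "drop (length w - r) w \<noteq> []" "set (drop (length w - r) w) \<subseteq> {0..M}"
  "last (drop (length w - r) w) < M"
  using ws r by (auto dest: in_set_dropD)

private lemma Ur: "drop r w < take (length w - r) w"
  using fund_cond(2)[OF w, of r] r by simp

private lemma Lr: "wbar M (take (length w - r) w) \<le> drop r w"
  using fund_cond(1)[OF w, of r] r by simp

private lemma Lr': "wbar M (drop r w) \<le> take (length w - r) w"
  using fund_cond'[OF w, of r] r by simp

lemma K1: "wbar M (take r w) < wplus (drop (length w - r) w)"
proof -
  have "wbar M (take (length w - (length w - r)) w) \<le> drop (length w - r) w"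
    using fund_cond(1)[OF w, of "length w - r"] r by simp
  then show ?thesis using r less_wplus[OF dqr(1)] by simp
qed

lemma K2: "wbar M (wplus (drop (length w - r) w)) < take r w"
proof -
  have "wbar M (drop (length w - r) w) \<le> take (length w - (length w - r)) w"
    using fund_cond'[OF w, of "length w - r"] r by simp
  then show ?thesis using r wbar_wplus_less[OF dqr] by simp
qed

lemma drop_blk:
  "drop r (blk M w s b) = (if s = 0 then (if b = 0 then drop r w else wplus (drop r w))
      else (if b = 0 then wbar M (wplus (drop r w)) else wbar M (drop r w)))"
  using r ws by (simp add: blk_def drop_wplus wbar_drop[symmetric])

lemma take_blk:
  "take r (blk M w s b) = (if s = 0 then take r w else wbar M (take r w))"
  using r ws by (simp add: blk_def take_wplus wbar_take[symmetric])

lemma tail_upper: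
  "drop r (blk M w s b) \<le> take (length w - r) w \<and>
   (b = 0 \<longrightarrow> drop r (blk M w s b) < take (length w - r) w)"
proof -
  have a: "wplus (drop r w) \<le> take (length w - r) w" using wplus_le[OF _ Ur] r by simp
  have b: "wbar M (wplus (drop r w)) < take (length w - r) w"
    using wbar_wplus_less[OF dr] Lr' by simp
  show ?thesis
  proof (cases "s = 0"; cases "b = 0")
  qed (use Ur a b Lr' in \<open>simp_all add: drop_blk\<close>)
qed

lemma tail_lower:
  "wbar M (take (length w - r) w) \<le> drop r (blk M w s b) \<and>
   (b \<noteq> 0 \<longrightarrow> wbar M (take (length w - r) w) < drop r (blk M w s b))"
proof -
  have a: "wbar M (take (length w - r) w) < wplus (drop r w)"
    using Lr less_wplus[OF dr(1)] by simp
  have b: "wbar M (take (length w - r) w) \<le> wbar M (wplus (drop r w))"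
    using wplus_le[OF _ Ur] r wplus_set[OF dr] ws
    by (subst wbar_le_iff) (auto dest: in_set_takeD)
  have c: "wbar M (take (length w - r) w) < wbar M (drop r w)"
    using Ur r dr ws by (subst wbar_less_iff) (auto dest: in_set_takeD)
  show ?thesis
  proof (cases "s = 0"; cases "b = 0")
  qed (use Lr a b c in \<open>simp_all add: drop_blk\<close>)
qed

end

section \<open>Closure\<close>

lemma wbar_eq_Nil [simp]: "wbar M x = [] \<longleftrightarrow> x = []"
  by (simp add: wbar_def)

lemma bw0_first: "w \<noteq> [] \<Longrightarrow> d \<noteq> [] \<Longrightarrow> hd d = 1 \<Longrightarrow> bw M w (0 # d) = wplus w @ bw M w d"
  by (cases d) (auto simp: blk_def)

lemma take_bw0: 
  assumes "w \<noteq> []" "d \<noteq> []" "hd d = 1" "k \<le> length w"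
  shows "take k (bw M w (0 # d)) = take k (wplus w)"
  using assms by (simp add: bw0_first)

lemma closure_bw:
  assumes w: "fundamental M w" and d: "fundamental 1 d"
  shows "fundamental M (bw M w (0 # d))"
proof -
  note wp = fund_props[OF w]
  note dp = fund1_props[OF d]
  define q where "q = length w"
  define n where "n = length d"
  define D where "D = 0 # d"
  define a where "a = bw M w D"
  have q1: "1 \<le> q" using wp q_def by (cases w) auto
  have n2: "2 \<le> n" using dp n_def by simp
  have la: "length a = q * n" using bw_length[OF wp(1)] by (simp add: a_def D_def q_def n_def)
  have bD: "bits D" using dp by (simp add: D_def bits_def)
  have bd: "bits d" using dp by (simp add: bits_def)
  have lD: "length D = n + 1" by (simp add: D_def n_def)
  have dne: "d \<noteq> []" using n2 n_def by auto
  have Dn: "D ! n = 0" using dp(4) dne by (simp add: D_def n_def last_conv_nth)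
  have aw: "a = wplus w @ bw M w d" using bw0_first[OF wp(1) dne dp(3)] by (simp add: a_def D_def)
  have wps: "set (wplus w) \<subseteq> {0..M}" using wplus_set[OF wp(1) wp(6) wp(2)] .
  have cond: "wbar M (take (length a - i) a) \<le> drop i a \<and> drop i a < take (length a - i) a"
    if i: "1 \<le> i" "i < length a" for i
  proof -
    define j where "j = i div q"
    define r where "r = i mod q"
    have ijr: "i = j * q + r" by (simp add: j_def r_def)
    have rq: "r < q" using q1 by (simp add: r_def)
    have jn: "j < n"
    proof (rule ccontr)
      assume "\<not> j < n" then have "n * q \<le> j * q" by simp
      moreover have "q * n = n * q" by (rule mult.commute)
      ultimately show False using i(2) la ijr by linarith
    qed
    have "n * q - j * q = (n - j) * q" by (simp add: diff_mult_distrib)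
    then have lai: "length a - i = (n - j) * q - r" using la ijr by (simp add: mult.commute)
    have dja: "drop (j * q) a = bw M w (drop j D)"
      using bw_drop[OF wp(1)] by (simp add: a_def q_def)
    show ?thesis
    proof (cases "r = 0")
      case True
      then have j1: "1 \<le> j" using i ijr by (cases j) auto
      have S: "drop i a = bw M w (d ! (j - 1) # drop j d)"
      proof -
        have "drop j D = drop (j - 1) d" using j1 by (cases j) (simp_all add: D_def)
        also have "\<dots> = d ! (j - 1) # drop j d" using Cons_nth_drop_Suc[of "j - 1" d] j1 jn n_def
          by simp
        finally show ?thesis using dja ijr True by simp
      qed
      have P: "take (length a - i) a = bw M w (0 # take (n - j) d)"
      proof -
        have "take (length a - i) a = take ((n - j) * q) a" using lai True by simp
        also have "\<dots> = bw M w (take (Suc (n - j)) D)"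
          using bw_take[OF wp(1)] by (simp add: a_def q_def)
        finally show ?thesis by (simp add: D_def)
      qed
      have ldj: "length (drop j d) = length (take (n - j) d)" using jn n_def by simp
      have bdj: "bits (drop j d)" "bits (take (n - j) d)" using bd
        by (auto simp: bits_def dest: in_set_dropD in_set_takeD)
      have dj1: "d ! (j - 1) \<le> 1" using bd jn j1 n_def by (intro bits_nth) auto
      have fu: "drop j d < take (n - j) d" using fund_cond(2)[OF d, of j] j1 jn n_def by simp
      have fl: "flip (take (n - j) d) \<le> drop j d"
        using fund_cond(1)[OF d, of j] j1 jn n_def by (simp add: wbar_def flip_def)
      have djne: "drop j d = d ! j # drop (Suc j) d" using jn n_def by (simp add: Cons_nth_drop_Suc)
      have tne: "take (n - j) d = 1 # take (n - j - 1) (tl d)"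
        using jn dne dp(3) by (cases d) (auto simp: n_def take_Cons')
      have hdblk1: "hd (blk M w 1 x) < hd (wplus w)" for x
        using fund_hd_ineq[OF w] hd_wplus[OF wp(1)] wp(1) wplus_ne[OF wp(1)]
        by (auto simp: blk_def wbar_def hd_map)
      have hdblk0: "hd (wbar M (wplus w)) < hd (blk M w 0 x)" for x
        using fund_hd_ineq[OF w] hd_wplus[OF wp(1)] wp(1) wplus_ne[OF wp(1)]
        by (auto simp: blk_def wbar_def hd_map)
      have blkne: "blk M w s' x \<noteq> []" for s' x
        using wp(1) blk_length[OF wp(1), of M s' x] by (metis length_0_conv)
      have up: "drop i a < take (length a - i) a"
      proof (cases "d ! (j - 1) = 0")
        case True
        then show ?thesis using S P bw_cmp[OF wp(1,6,2) ldj bdj] fu by simp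
      next
        case False
        then have "d ! (j - 1) = 1" using dj1 by simp
        then have S': "drop i a = blk M w 1 (d ! j) @ bw M w (drop j d)" using S djne by simp
        have P': "take (length a - i) a = wplus w @ bw M w (take (n - j) d)"
          using P tne by (simp add: blk_def)
        show ?thesis unfolding S' P'
          by (rule hd_less_imp) (use wplus_ne[OF wp(1)] hdblk1[of "d ! j"] blkne[of 1 "d ! j"] in \<open>simp_all add: hd_append2\<close>)
      qed
      have lo: "wbar M (take (length a - i) a) \<le> drop i a"
      proof -
        have bP: "wbar M (take (length a - i) a) = bw M w (1 # flip (take (n - j) d))"
          using P bw_bar[OF wp(1,6,2)] bdj by simp
        show ?thesis
        proof (cases "d ! (j - 1) = 0")
          case True
          then have S': "drop i a = blk M w 0 (d ! j) @ bw M w (drop j d)" using S djne by simp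
          have P': "bw M w (1 # flip (take (n - j) d)) = wbar M (wplus w) @ bw M w (flip (take (n - j) d))"
            using tne by (simp add: blk_def)
          have "bw M w (1 # flip (take (n - j) d)) < drop i a" unfolding S' P'
            by (rule hd_less_imp) (use wplus_ne[OF wp(1)] hdblk0[of "d ! j"] blkne[of 0 "d ! j"] wbar_length in \<open>simp_all add: hd_append2\<close>)
          then show ?thesis using bP by simp
        next
          case False
          then have "d ! (j - 1) = 1" using dj1 by simp
          moreover have "bits (flip (take (n - j) d))" using bdj by (auto simp: flip_def bits_def)
          ultimately show ?thesis using bP S bw_cmp_le[OF wp(1,6,2), of "flip (take (n - j) d)" "drop j d" 1]
            ldj bdj fl by (simp add: flip_def)
        qed
      qed
      show ?thesis using up lo by simp
    next
      case False
      then have r0: "0 < r" by simp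
      then have q2: "2 \<le> q" using rq by simp
      have rw: "r < length w" using rq q_def by simp
      define s where "s = D ! j"
      define b where "b = D ! (j + 1)"
      define B where "B = blk M w s b"
      have sb: "s \<le> 1" "b \<le> 1"
        using bits_nth[OF bD, of j] bits_nth[OF bD, of "j + 1"] jn lD by (simp_all add: s_def b_def)
      have split1: "drop (j * q) a = B @ bw M w (drop (j + 1) D)"
        using dja bw_drop_Cons[of j D M w] jn lD by (simp add: B_def s_def b_def)
      have lB: "length B = q" using wp(1) by (simp add: B_def q_def)
      have "drop i a = drop r (drop (j * q) a)" using ijr by (simp add: add.commute)
      then have S: "drop i a = drop r B @ bw M w (drop (j + 1) D)"
        using split1 lB rq by simp
      have lS: "length (drop i a) = length a - i" by simp
      have "1 * q \<le> (n - j) * q" using jn by (intro mult_le_mono1) simp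
      then have qr: "q - r \<le> length a - i" using lai by (simp add: diff_le_mono)
      have tS: "take (q - r) (drop i a) = drop r B" using S lB by simp
      have tP: "take (q - r) (take (length a - i) a) = take (q - r) w"
      proof -
        have "take (q - r) (take (length a - i) a) = take (q - r) a" using qr by (simp add: min_def)
        also have "\<dots> = take (q - r) (wplus w)" using aw q_def wp(1) by simp
        also have "\<dots> = take (q - r) w" using take_wplus[of "q - r" w] r0 rq q_def by simp
        finally show ?thesis .
      qed
      have nxt: "take q (drop i a) = drop r B @ take r (blk M w b (D ! (j + 2)))"
        if jn2: "j + 1 < n"
      proof -
        have "bw M w (drop (j + 1) D) = blk M w b (D ! (j + 2)) @ bw M w (drop (j + 2) D)"
          using bw_drop_Cons[of "j + 1" D M w] jn2 lD by (simp add: b_def)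
        then show ?thesis using S lB rq wp(1) q_def by simp
      qed
      have qai: "q \<le> length a - i" if jn2: "j + 1 < n"
      proof -
        have "(n - j) * q \<ge> 2 * q" using jn2 by (intro mult_le_mono1) simp
        then show ?thesis using lai rq by linarith
      qed
      have tqP: "take q (take (length a - i) a) = take (q - r) w @ wplus (drop (q - r) w)"
        if jn2: "j + 1 < n"
      proof -
        have "take q (take (length a - i) a) = wplus w" using qai[OF jn2] aw q_def wp(1) by simp
        also have "\<dots> = take (q - r) (wplus w) @ drop (q - r) (wplus w)" by simp
        also have "\<dots> = take (q - r) w @ wplus (drop (q - r) w)"
          using r0 rq q_def by (simp add: take_wplus drop_wplus)
        finally show ?thesis .
      qed
      have lenP: "length (take (length a - i) a) = length a - i" using i by simp
      have lenS: "q - r \<le> length (drop i a)" using qr by simp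
      have lenP': "q - r \<le> length (take (length a - i) a)" using qr lenP by simp
      have lenB: "length (drop r B) = length (take (q - r) w)" using lB rq q_def by simp
      have lenbP: "q - r \<le> length (wbar M (take (length a - i) a))" using lenP' by simp
      have up: "drop i a < take (length a - i) a"
      proof (cases "b = 0")
        case True
        have "drop r B < take (q - r) w" using tail_upper[OF w r0 rw, of s b] True
          by (simp add: B_def q_def)
        then have "take (q - r) (drop i a) < take (q - r) (take (length a - i) a)"
          using tS tP by simp
        with lenS lenP' show ?thesis by (rule take_less_imp)
      next
        case False
        then have b1: "b = 1" using sb by simp
        then have jn2: "j + 1 < n" using Dn jn by (cases "j + 1 = n") (auto simp: b_def)
        have le: "drop r B \<le> take (q - r) w" using tail_upper[OF w r0 rw, of s b]
          by (simp add: B_def q_def)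
        have k1: "take r (blk M w b (D ! (j + 2))) < wplus (drop (q - r) w)"
          using K1[OF w r0 rw] take_blk[OF w r0 rw] b1 q_def by simp
        have "drop r B @ take r (blk M w b (D ! (j + 2))) < take (q - r) w @ wplus (drop (q - r) w)"
          unfolding append_less_iff[OF lenB] using le k1 by (auto simp: order_le_less)
        then have "take q (drop i a) < take q (take (length a - i) a)"
          unfolding nxt[OF jn2] tqP[OF jn2] .
        moreover have "q \<le> length (drop i a)" "q \<le> length (take (length a - i) a)"
          using qai[OF jn2] lenP by simp_all
        ultimately show ?thesis using take_less_imp by blast
      qed
      have lo: "wbar M (take (length a - i) a) \<le> drop i a"
      proof (cases "b = 0")
        case False
        have "wbar M (take (q - r) w) < drop r B" using tail_lower[OF w r0 rw, of s b] False
          by (simp add: B_def q_def)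
        then have "take (q - r) (wbar M (take (length a - i) a)) < take (q - r) (drop i a)"
          using tS tP by (simp add: wbar_take[symmetric])
        with lenbP lenS have "wbar M (take (length a - i) a) < drop i a" by (rule take_less_imp)
        then show ?thesis by simp
      next
        case True
        have le: "wbar M (take (q - r) w) \<le> drop r B" using tail_lower[OF w r0 rw, of s b]
          by (simp add: B_def q_def)
        show ?thesis
        proof (cases "j + 1 < n")
          case jn2: True
          have k2: "wbar M (wplus (drop (q - r) w)) < take r (blk M w b (D ! (j + 2)))"
            using K2[OF w r0 rw] take_blk[OF w r0 rw] True q_def by simp
          have lenB': "length (wbar M (take (q - r) w)) = length (drop r B)" using lenB by simp
          have "wbar M (take (q - r) w) @ wbar M (wplus (drop (q - r) w)) < drop r B @ take r (blk M w b (D ! (j + 2)))"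
            unfolding append_less_iff[OF lenB'] using le k2 by (auto simp: order_le_less)
          then have "take q (wbar M (take (length a - i) a)) < take q (drop i a)"
            unfolding nxt[OF jn2] wbar_take[symmetric] tqP[OF jn2] by simp
          moreover have "q \<le> length (drop i a)" "q \<le> length (wbar M (take (length a - i) a))"
            using qai[OF jn2] lenP by simp_all
          ultimately show ?thesis using take_less_imp less_imp_le by blast
        next
          case False
          then have jn1: "j + 1 = n" using jn by simp
          then have "drop (j + 1) D = [D ! n]" using lD Cons_nth_drop_Suc[of n D] by simp
          then have "drop i a = drop r B" using S by simp
          moreover have "n - j = 1" using jn1 by simp
          then have "length a - i = q - r" using lai by simp
          ultimately show ?thesis using le tP by simp
        qed
      qed
      show ?thesis using up lo by simp
    qed
  qed
  have "1 * 2 \<le> q * n" using q1 n2 by (rule mult_le_mono)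
  then have "2 \<le> length a" using la by simp
  moreover have "set a \<subseteq> {0..M}" using bw_set[OF wp(1,6,2)] by (simp add: a_def)
  ultimately have "fundamental M a" unfolding fundamental_iff2 using cond by blast
  then show ?thesis by (simp add: a_def D_def)
qed

lemma closure:
  assumes "fundamental M w" "fundamental 1 d"
  shows "fundamental M (comp M w d)"
proof -
  note dp = fund1_props[OF assms(2)]
  have "comp M w d = bw M w (0 # d)"
    using dp by (intro comp_eq) (auto simp: bits_def)
  then show ?thesis using closure_bw[OF assms] by simp
qed

section \<open>Reverse closure\<close>

lemma less_by_index:
  fixes x y :: "nat list"
  assumes "length x = length y" "t < length x" "\<forall>u<t. x ! u = y ! u" "x ! t < y ! t"
  shows "x < y"
proof -
  have tx: "take t x = take t y" using assms by (intro nth_equalityI) auto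
  have "x = take t x @ x ! t # drop (Suc t) x" using assms(2) by (simp add: id_take_nth_drop)
  moreover have "y = take t y @ y ! t # drop (Suc t) y" using assms(1,2) by (simp add: id_take_nth_drop)
  ultimately show ?thesis using tx assms(4) append_less_iff[of "take t x" "take t y"] assms(1,2)
    by (metis Cons_less_Cons length_take)
qed

lemma not_rep1_less: "bits x \<Longrightarrow> \<not> replicate (length x) 1 < x"
  by (induction x) auto

lemma not_less_rep0: "\<not> (x :: nat list) < replicate (length x) 0"
  by (induction x) auto

lemma boundary_forms:
  assumes "w \<noteq> []" "f \<noteq> []" "hd f = 1" "1 \<le> j" "j < length f"
  shows "drop (j * length w) (bw M w (0 # f)) = bw M w (f ! (j - 1) # drop j f)"
    "take (length (bw M w (0 # f)) - j * length w) (bw M w (0 # f)) = bw M w (0 # take (length f - j) f)"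
proof -
  have "drop (j * length w) (bw M w (0 # f)) = bw M w (drop j (0 # f))"
    using bw_drop[OF assms(1)] by blast
  also have "drop j (0 # f) = drop (j - 1) f" using assms(4) by (cases j) auto
  also have "\<dots> = f ! (j - 1) # drop j f" using Cons_nth_drop_Suc[of "j - 1" f] assms(4,5) by simp
  finally show "drop (j * length w) (bw M w (0 # f)) = bw M w (f ! (j - 1) # drop j f)" .
  have "length (bw M w (0 # f)) - j * length w = (length f - j) * length w"
    using bw_length[OF assms(1), of M "0 # f"] by (simp add: diff_mult_distrib mult.commute[of "length w"])
  then show "take (length (bw M w (0 # f)) - j * length w) (bw M w (0 # f)) = bw M w (0 # take (length f - j) f)"
    using bw_take[OF assms(1), of "length f - j" M "0 # f"] by simp
qed

lemma rev_closure_conds: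
  assumes w: "fundamental M w" and f: "bits f" "f \<noteq> []" "hd f = 1"
    and a: "fundamental M (bw M w (0 # f))" and j: "1 \<le> j" "j < length f"
  shows "f ! (j - 1) = 0 \<Longrightarrow> drop j f < take (length f - j) f"
    "f ! (j - 1) = 1 \<Longrightarrow> wbar 1 (take (length f - j) f) \<le> drop j f"
proof -
  note wp = fund_props[OF w]
  let ?a = "bw M w (0 # f)"
  let ?i = "j * length w"
  have q1: "1 \<le> length w" using wp(1) by (cases w) auto
  have la: "length ?a = length w * length f" using bw_length[OF wp(1)] by simp
  have i1: "1 \<le> ?i" using j q1 by (metis mult_le_mono nat_mult_1)
  have i2: "?i < length ?a" using j q1 la wp(1) by (simp add: mult.commute)
  note c = fund_cond[OF a i1 i2]
  note bf = boundary_forms[OF wp(1) f(2,3) j]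
  have ldj: "length (drop j f) = length (take (length f - j) f)" using j by simp
  have bdj: "bits (drop j f)" "bits (take (length f - j) f)" using f(1)
    by (auto simp: bits_def dest: in_set_dropD in_set_takeD)
  show "drop j f < take (length f - j) f" if z: "f ! (j - 1) = 0"
    using c(2) bf z bw_cmp[OF wp(1,6,2) ldj bdj, of 0] by simp
  show "wbar 1 (take (length f - j) f) \<le> drop j f" if o: "f ! (j - 1) = 1"
  proof -
    have bfl: "bits (flip (take (length f - j) f))" using bdj by (auto simp: flip_def bits_def)
    have "wbar M (bw M w (0 # take (length f - j) f)) = bw M w (1 # flip (take (length f - j) f))"
      using bw_bar[OF wp(1,6,2), of "0 # take (length f - j) f"] bdj by simp
    then have "bw M w (1 # flip (take (length f - j) f)) \<le> bw M w (1 # drop j f)"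
      using c(1) bf o by simp
    then have "flip (take (length f - j) f) \<le> drop j f"
      using bw_cmp_le[OF wp(1,6,2), of "flip (take (length f - j) f)" "drop j f" 1] bfl bdj ldj
      by (simp add: flip_def)
    then show ?thesis by (simp add: wbar_def flip_def)
  qed
qed

lemma bits_take: "bits f \<Longrightarrow> bits (take n f)"
  by (auto simp: bits_def dest: in_set_takeD)

lemma bits_drop: "bits f \<Longrightarrow> bits (drop n f)"
  by (auto simp: bits_def dest: in_set_dropD)

lemma bits_set: "bits f \<Longrightarrow> set f \<subseteq> {0..1}"
  by (simp add: bits_def)

lemma bin_C1:
  assumes f: "bits f" "hd f = 1" "last f = 0" "2 \<le> length f"
    and H0: "\<And>j. 1 \<le> j \<Longrightarrow> j < length f \<Longrightarrow> f ! (j - 1) = 0 \<Longrightarrow> drop j f < take (length f - j) f"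
  shows "1 \<le> j \<Longrightarrow> j < length f \<Longrightarrow> f ! (j - 1) = 1 \<Longrightarrow> drop j f < take (length f - j) f"
proof (induction j rule: less_induct)
  case (less j)
  define k where "k = length f"
  have fne: "f \<noteq> []" using f(4) by auto
  have f01: "\<And>u. u < k \<Longrightarrow> f ! u \<noteq> 0 \<Longrightarrow> f ! u = 1"
    using bits_nth[OF f(1)] k_def by fastforce
  show ?case
  proof (cases "\<exists>s. 1 \<le> s \<and> s < j \<and> f ! (s - 1) = 0")
    case False
    have ones: "\<And>t. t < j \<Longrightarrow> f ! t = 1"
    proof -
      fix t assume t: "t < j"
      show "f ! t = 1"
      proof (cases "t = j - 1")
        case True then show ?thesis using less.prems by simp
      next
        case False
        have "\<not> (1 \<le> Suc t \<and> Suc t < j \<and> f ! (Suc t - 1) = 0)" using \<open>\<not> (\<exists>s. _)\<close> by blast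
        then have "f ! t \<noteq> 0" using t False by simp
        then show ?thesis using f01 t less.prems k_def by simp
      qed
    qed
    have ex0: "\<exists>z. z < k \<and> f ! z = 0" using f(3) fne k_def
      by (intro exI[of _ "k - 1"]) (simp add: last_conv_nth)
    define z where "z = (LEAST z. z < k \<and> f ! z = 0)"
    have z: "z < k" "f ! z = 0" using LeastI_ex[OF ex0] by (simp_all add: z_def)
    have zmin: "\<And>t. t < z \<Longrightarrow> f ! t = 1"
    proof -
      fix t assume "t < z"
      then have "\<not> (t < k \<and> f ! t = 0)" using not_less_Least z_def by blast
      then show "f ! t = 1" using f01 \<open>t < z\<close> z(1) by simp
    qed
    have jz: "j \<le> z" using ones z(2) by (metis not_le zero_neq_one)
    show ?thesis
    proof (rule less_by_index[of _ _ "z - j"])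
      show "length (drop j f) = length (take (length f - j) f)" by simp
      show "z - j < length (drop j f)" using z jz k_def by simp
      show "\<forall>u<z - j. drop j f ! u = take (length f - j) f ! u"
      proof (intro allI impI)
        fix u assume u: "u < z - j"
        have "drop j f ! u = f ! (j + u)" using u z jz k_def by simp
        also have "\<dots> = 1" using zmin[of "j + u"] u by simp
        also have "\<dots> = f ! u" using zmin[of u] u by simp
        also have "\<dots> = take (length f - j) f ! u" using u z jz k_def by simp
        finally show "drop j f ! u = take (length f - j) f ! u" .
      qed
      have "drop j f ! (z - j) = f ! z" using z jz k_def by simp
      moreover have "take (length f - j) f ! (z - j) = f ! (z - j)" using z jz k_def by simp
      moreover have "f ! (z - j) = 1" using zmin[of "z - j"] less.prems jz by simp
      ultimately show "drop j f ! (z - j) < take (length f - j) f ! (z - j)" using z by simp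
    qed
  next
    case True
    define S where "S = {s. 1 \<le> s \<and> s < j \<and> f ! (s - 1) = 0}"
    define s where "s = Max S"
    have finS: "finite S" unfolding S_def by (rule finite_subset[of _ "{..<j}"]) auto
    have neS: "S \<noteq> {}" using True S_def by auto
    have sS: "s \<in> S" using Max_in[OF finS neS] s_def by simp
    then have s: "1 \<le> s" "s < j" "f ! (s - 1) = 0" by (auto simp: S_def)
    have smax: "\<And>t. t \<in> S \<Longrightarrow> t \<le> s" using Max_ge[OF finS] s_def by simp
    have ones: "\<And>u. s \<le> u \<Longrightarrow> u < j \<Longrightarrow> f ! u = 1"
    proof -
      fix u assume u: "s \<le> u" "u < j"
      show "f ! u = 1"
      proof (cases "u = j - 1")
        case True then show ?thesis using less.prems by simp
      next
        case False
        then have "Suc u \<notin> S" using smax u by fastforce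
        then have "f ! u \<noteq> 0" using u False s unfolding S_def by auto
        then show ?thesis using f01 u less.prems k_def by simp
      qed
    qed
    have d1: "drop s f = replicate (j - s) 1 @ drop j f"
    proof -
      have "take (j - s) (drop s f) = replicate (j - s) 1"
        using ones less.prems s by (intro nth_equalityI) auto
      moreover have "drop (j - s) (drop s f) = drop j f" using s by simp
      ultimately show ?thesis by (metis append_take_drop_id)
    qed
    have t1: "take (length f - s) f = take (j - s) f @ take (length f - j) (drop (j - s) f)"
    proof -
      have "length f - s = (j - s) + (length f - j)" using s less.prems by simp
      then show ?thesis by (simp add: take_add)
    qed
    have H0s: "drop s f < take (length f - s) f" using H0[OF s(1)] s less.prems by simp
    have lt: "length (replicate (j - s) (1::nat)) = length (take (j - s) f)" using s less.prems by simp
    have "replicate (j - s) 1 < take (j - s) f \<or>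
          (replicate (j - s) 1 = take (j - s) f \<and> drop j f < take (length f - j) (drop (j - s) f))"
      using H0s unfolding d1 t1 append_less_iff[OF lt] .
    moreover have "\<not> replicate (j - s) 1 < take (j - s) f"
      using not_rep1_less[OF bits_take[OF f(1), of "j - s"]] lt by simp
    ultimately have eq: "replicate (j - s) 1 = take (j - s) f"
      and lt2: "drop j f < take (length f - j) (drop (j - s) f)" by auto
    have fjs: "f ! (j - s - 1) = 1"
    proof -
      have "take (j - s) f ! (j - s - 1) = 1" using eq[symmetric] s by simp
      then show ?thesis using s by simp
    qed
    have IH: "drop (j - s) f < take (length f - (j - s)) f"
      using less.IH[of "j - s"] s less.prems fjs by simp
    have "take (length f - j) (drop (j - s) f) \<le> take (length f - j) (take (length f - (j - s)) f)"
      by (rule take_le_mono) (use IH s less.prems in simp_all)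
    also have "\<dots> = take (length f - j) f" using s less.prems by (simp add: min_def)
    finally show ?thesis using lt2 by simp
  qed
qed


lemma bin_C2:
  assumes f: "bits f" "hd f = 1" "last f = 0" "2 \<le> length f"
    and H1: "\<And>j. 1 \<le> j \<Longrightarrow> j < length f \<Longrightarrow> f ! (j - 1) = 1 \<Longrightarrow> wbar 1 (take (length f - j) f) \<le> drop j f"
    and C1: "\<And>j. 1 \<le> j \<Longrightarrow> j < length f \<Longrightarrow> f ! (j - 1) = 1 \<Longrightarrow> drop j f < take (length f - j) f"
    and j: "1 \<le> j" "j < length f" "f ! (j - 1) = 0"
  shows "wbar 1 (take (length f - j) f) \<le> drop j f"
proof -
  have fne: "f \<noteq> []" using f(4) by auto
  have f0: "f ! 0 = 1" using f(2) fne by (simp add: hd_conv_nth)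
  have f01: "\<And>u. u < length f \<Longrightarrow> f ! u \<noteq> 1 \<Longrightarrow> f ! u = 0"
    using bits_nth[OF f(1)] by fastforce
  define S where "S = {s. 1 \<le> s \<and> s < j \<and> f ! (s - 1) = 1}"
  define s where "s = Max S"
  have j2: "2 \<le> j" using j f0 by (cases j) (auto, cases "j = 1", auto)
  have finS: "finite S" unfolding S_def by (rule finite_subset[of _ "{..<j}"]) auto
  have neS: "S \<noteq> {}" using j2 f0 unfolding S_def by (intro exI[of _ 1] ex_in_conv[THEN iffD1]) auto
  have sS: "s \<in> S" using Max_in[OF finS neS] s_def by simp
  then have s: "1 \<le> s" "s < j" "f ! (s - 1) = 1" by (auto simp: S_def)
  have smax: "\<And>t. t \<in> S \<Longrightarrow> t \<le> s" using Max_ge[OF finS] s_def by simp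
  have zeros: "\<And>u. s \<le> u \<Longrightarrow> u < j \<Longrightarrow> f ! u = 0"
  proof -
    fix u assume u: "s \<le> u" "u < j"
    show "f ! u = 0"
    proof (cases "u = j - 1")
      case True then show ?thesis using j by simp
    next
      case False
      then have "Suc u \<notin> S" using smax u by fastforce
      then have "f ! u \<noteq> 1" using u False s unfolding S_def by auto
      then show ?thesis using f01 u j by simp
    qed
  qed
  have d1: "drop s f = replicate (j - s) 0 @ drop j f"
  proof -
    have "take (j - s) (drop s f) = replicate (j - s) 0"
      using zeros j s by (intro nth_equalityI) auto
    moreover have "drop (j - s) (drop s f) = drop j f" using s by simp
    ultimately show ?thesis by (metis append_take_drop_id)
  qed
  have t1: "wbar 1 (take (length f - s) f) = wbar 1 (take (j - s) f) @ wbar 1 (take (length f - j) (drop (j - s) f))"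
  proof -
    have "length f - s = (j - s) + (length f - j)" using s j by simp
    then show ?thesis by (simp add: take_add)
  qed
  have H1s: "wbar 1 (take (length f - s) f) \<le> drop s f" using H1[OF s(1)] s j by simp
  have lt: "length (wbar 1 (take (j - s) f)) = length (replicate (j - s) (0::nat))" using s j by simp
  have "wbar 1 (take (j - s) f) < replicate (j - s) 0 \<or>
        (wbar 1 (take (j - s) f) = replicate (j - s) 0 \<and> wbar 1 (take (length f - j) (drop (j - s) f)) \<le> drop j f)"
    using H1s unfolding d1 t1 append_le_iff[OF lt] .
  moreover have "\<not> wbar 1 (take (j - s) f) < replicate (j - s) 0"
    using not_less_rep0[of "wbar 1 (take (j - s) f)"] lt by simp
  ultimately have eq: "wbar 1 (take (j - s) f) = replicate (j - s) 0"
    and le2: "wbar 1 (take (length f - j) (drop (j - s) f)) \<le> drop j f" by auto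
  have fjs: "f ! (j - s - 1) = 1"
  proof -
    have "wbar 1 (take (j - s) f) ! (j - s - 1) = 0" using eq s by simp
    then have "1 - f ! (j - s - 1) = 0" using s j by (simp add: wbar_def)
    moreover have "f ! (j - s - 1) \<le> 1" using bits_nth[OF f(1), of "j - s - 1"] s j by simp
    ultimately show ?thesis by simp
  qed
  have C1': "drop (j - s) f < take (length f - (j - s)) f"
    using C1[of "j - s"] s j fjs by simp
  have "take (length f - j) (drop (j - s) f) \<le> take (length f - j) (take (length f - (j - s)) f)"
    by (rule take_le_mono) (use C1' s j in simp_all)
  also have "\<dots> = take (length f - j) f" using s j by (simp add: min_def)
  finally have tl: "take (length f - j) (drop (j - s) f) \<le> take (length f - j) f" .
  have "wbar 1 (take (length f - j) f) \<le> wbar 1 (take (length f - j) (drop (j - s) f))"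
    using tl bits_set[OF bits_take[OF f(1)]] bits_set[OF bits_take[OF bits_drop[OF f(1)]]] s j
    by (subst wbar_le_iff) auto
  then show ?thesis using le2 by simp
qed

lemma bin_fund:
  assumes f: "bits f" "hd f = 1" "last f = 0" "2 \<le> length f"
    and H0: "\<And>j. 1 \<le> j \<Longrightarrow> j < length f \<Longrightarrow> f ! (j - 1) = 0 \<Longrightarrow> drop j f < take (length f - j) f"
    and H1: "\<And>j. 1 \<le> j \<Longrightarrow> j < length f \<Longrightarrow> f ! (j - 1) = 1 \<Longrightarrow> wbar 1 (take (length f - j) f) \<le> drop j f"
  shows "fundamental 1 f"
proof -
  note C1 = bin_C1[OF f H0]
  note C2 = bin_C2[OF f H1 C1]
  have "\<forall>i. 1 \<le> i \<and> i < length f \<longrightarrow> wbar 1 (take (length f - i) f) \<le> drop i f \<and> drop i f < take (length f - i) f"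
  proof (intro allI impI)
    fix i assume i: "1 \<le> i \<and> i < length f"
    have "i - 1 < length f" using i by auto
    then have "f ! (i - 1) \<le> 1" by (rule bits_nth[OF f(1)])
    then have "f ! (i - 1) = 0 \<or> f ! (i - 1) = 1" by auto
    then show "wbar 1 (take (length f - i) f) \<le> drop i f \<and> drop i f < take (length f - i) f"
      using C1[of i] C2[of i] H0[of i] H1[of i] i by auto
  qed
  then show ?thesis unfolding fundamental_iff2 using f bits_set[OF f(1)] by auto
qed

lemma rev_closure:
  assumes w: "fundamental M w" and f: "bits f" "hd f = 1" "last f = 0" "2 \<le> length f"
    and a: "fundamental M (bw M w (0 # f))"
  shows "fundamental 1 f"
proof -
  have fne: "f \<noteq> []" using f(4) by auto
  show ?thesis
  proof (rule bin_fund[OF f])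
    fix j assume "1 \<le> j" "j < length f" "f ! (j - 1) = 0"
    then show "drop j f < take (length f - j) f"
      using rev_closure_conds(1)[OF w f(1) fne f(2) a] by blast
  next
    fix j assume "1 \<le> j" "j < length f" "f ! (j - 1) = 1"
    then show "wbar 1 (take (length f - j) f) \<le> drop j f"
      using rev_closure_conds(2)[OF w f(1) fne f(2) a] by blast
  qed
qed

lemma wplus_append: "v \<noteq> [] \<Longrightarrow> wplus (u @ v) = u @ wplus v"
  by (cases v rule: rev_cases) (simp, metis append_assoc wplus_snoc)

lemma blk_ne [simp]: "w \<noteq> [] \<Longrightarrow> blk M w s b \<noteq> []"
  using blk_length[of w M s b] by (metis length_0_conv)

lemma bw_wplus:
  assumes "w \<noteq> []" "last w < M"
  shows "wplus (bw M w (s # u @ [0])) = bw M w (s # u @ [1])"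
proof (induction u arbitrary: s)
  case Nil then show ?case using blk_plus[OF assms] by simp
next
  case (Cons x u)
  have "bw M w (x # u @ [0]) \<noteq> []" using assms(1) by (cases u) auto
  then show ?case using Cons[of x] by (simp add: wplus_append)
qed

lemma key_lemma:
  assumes w: "fundamental M w" and d: "fundamental 1 d"
    and c: "fundamental M c" and e: "fundamental 1 e"
    and eq: "bw M w (0 # d) = bw M c (0 # e)" and lt: "length w < length c"
  shows "\<exists>f. fundamental 1 f \<and> c = bw M w (0 # f) \<and> bits f \<and> f \<noteq> [] \<and> hd f = 1"
proof -
  note wp = fund_props[OF w]
  note cp = fund_props[OF c]
  note dp = fund1_props[OF d]
  note ep = fund1_props[OF e]
  define q where "q = length w"
  define p where "p = length c"
  define n where "n = length d"
  define D where "D = 0 # d"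
  define a where "a = bw M w D"
  have q1: "0 < q" using wp(1) q_def by simp
  have qp: "q < p" using lt by (simp add: p_def q_def)
  have bD: "bits D" using dp by (simp add: D_def bits_def)
  have bd: "bits d" using dp by (simp add: bits_def)
  have lD: "length D = n + 1" by (simp add: D_def n_def)
  have dne: "d \<noteq> []" using dp(2) by auto
  have ene: "e \<noteq> []" using ep(2) by auto
  have la: "length a = q * n" using bw_length[OF wp(1)] by (simp add: a_def D_def q_def n_def)
  have la2: "length a = p * length e" using bw_length[OF cp(1), of M "0 # e"] eq
    by (simp add: a_def D_def p_def)
  have m2p: "2 * p \<le> length a" using la2 ep(2) by (simp add: mult.commute)
  have aw: "a = wplus w @ bw M w d" using bw0_first[OF wp(1) dne dp(3)] by (simp add: a_def D_def)
  have ac: "a = wplus c @ bw M c e" using bw0_first[OF cp(1) ene ep(3)] eq by (simp add: a_def D_def)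
  obtain e2 er where e2: "e = 1 # e2 # er" using ep(2,3) by (cases e; cases "tl e") auto
  have dpa: "drop p a = blk M c 1 e2 @ bw M c (e2 # er)"
    using ac e2 cp(1) by (simp add: p_def)
  have tqa: "take q a = wplus w" using aw wp(1) q_def by simp
  have tq_dp: "take q (drop p a) = wbar M (wplus w)"
  proof -
    have "take q (drop p a) = take q (blk M c 1 e2)" using dpa qp cp(1) p_def by simp
    also have "\<dots> = wbar M (take q c)" using take_blk[OF c q1, of 1 e2] qp p_def by simp
    also have "take q c = take q (wplus c)" using take_wplus[of q c] qp p_def by simp
    also have "\<dots> = take q a" using ac qp p_def cp(1) by simp
    finally show ?thesis using tqa by simp
  qed
  define j where "j = p div q"
  define r where "r = p mod q"
  have pjr: "p = j * q + r" by (simp add: j_def r_def)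
  have rq: "r < q" using q1 by (simp add: r_def)
  have r0: "r = 0"
  proof (rule ccontr)
    assume "r \<noteq> 0"
    then have r0: "0 < r" by simp
    have rw: "r < length w" using rq q_def by simp
    have j1: "1 \<le> j" using qp pjr rq by (cases j) auto
    have "(j + 1) * q < length a" using m2p pjr j1 r0 qp by (simp add: algebra_simps)
    then have "(j + 1) * q < q * n" using la by simp
    then have "(j + 1) * q < n * q" by (simp add: mult.commute)
    then have "j + 1 < n" using mult_less_cancel2 by blast
    then have jD: "j + 2 < length D" using lD by simp
    define b where "b = D ! (j + 1)"
    define B where "B = blk M w (D ! j) b"
    define N where "N = blk M w b (D ! (j + 2))"
    have "drop (j * q) a = B @ N @ bw M w (drop (j + 2) D)"
      using bw_drop[OF wp(1), of j M D] bw_drop_Cons[of j D M w] bw_drop_Cons[of "j + 1" D M w] jD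
      by (simp add: a_def q_def B_def N_def b_def)
    moreover have "drop p a = drop r (drop (j * q) a)" using pjr by (simp add: add.commute)
    ultimately have "drop p a = drop r B @ N @ bw M w (drop (j + 2) D)"
      using wp(1) rq q_def by (simp add: B_def)
    then have "take q (drop p a) = drop r B @ take r N"
      using wp(1) rq q_def by (simp add: B_def N_def)
    moreover have "wbar M (wplus w) = wbar M (take (q - r) w) @ wbar M (wplus (drop (q - r) w))"
    proof -
      have "wplus w = take (q - r) (wplus w) @ drop (q - r) (wplus w)" by simp
      also have "\<dots> = take (q - r) w @ wplus (drop (q - r) w)"
        using r0 rq q_def by (simp add: take_wplus drop_wplus)
      finally show ?thesis by simp
    qed
    ultimately have eqs: "drop r B @ take r N = wbar M (take (q - r) w) @ wbar M (wplus (drop (q - r) w))"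
      using tq_dp by simp
    have lB: "length (drop r B) = length (wbar M (take (q - r) w))"
      using wp(1) rq q_def by (simp add: B_def)
    have e1: "drop r B = wbar M (take (q - r) w)" and e2': "take r N = wbar M (wplus (drop (q - r) w))"
      using eqs lB by (auto dest: append_eq_append_conv[THEN iffD1, rotated])
    show False
    proof (cases "b = 0")
      case False
      then show False using tail_lower[OF w r0 rw, of "D ! j" b] e1 by (simp add: B_def q_def)
    next
      case True
      then have "take r N = take r w" using take_blk[OF w r0 rw] by (simp add: N_def)
      then show False using K2[OF w r0 rw] e2' q_def by simp
    qed
  qed
  have pk: "p = j * q" using pjr r0 by simp
  have j2: "2 \<le> j" using pk qp by (cases j; cases "j - 1") auto
  have "(j + 1) * q \<le> (2 * j) * q" using j2 by (intro mult_le_mono1) simp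
  moreover have "(2 * j) * q = 2 * p" using pk by simp
  ultimately have "(j + 1) * q \<le> length a" using m2p by linarith
  then have "(j + 1) * q \<le> q * n" using la by simp
  then have "(j + 1) * q \<le> n * q" by (simp add: mult.commute)
  then have "j + 1 \<le> n" using q1 mult_le_cancel2 by blast
  then have jD: "j + 1 < length D" using lD by simp
  have dpa2: "drop p a = blk M w (D ! j) (D ! (j + 1)) @ bw M w (drop (j + 1) D)"
    using bw_drop[OF wp(1), of j M D] bw_drop_Cons[of j D M w] jD pk
    by (simp add: a_def q_def mult.commute)
  have blkeq: "blk M w (D ! j) (D ! (j + 1)) = wbar M (wplus w)"
    using tq_dp dpa2 wp(1) q_def by simp
  have Dj: "D ! j = 1"
  proof (rule ccontr)
    assume "D ! j \<noteq> 1"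
    moreover have "D ! j \<le> 1" using bits_nth[OF bD, of j] jD by simp
    ultimately have "D ! j = 0" by simp
    then have "hd (blk M w 0 (D ! (j + 1))) = hd (wbar M (wplus w))" using blkeq by simp
    moreover have "hd w \<le> hd (blk M w 0 (D ! (j + 1)))"
      using hd_wplus[OF wp(1)] by (auto simp: blk_def)
    moreover have "hd (wbar M (wplus w)) = M - hd (wplus w)"
      using wplus_ne[OF wp(1)] by (simp add: wbar_def hd_map)
    ultimately show False using fund_hd_ineq(2)[OF w] by simp
  qed
  define f where "f = take (j - 1) d @ [0]"
  have jn: "j \<le> n" using jD lD by simp
  have dj1: "d ! (j - 1) = 1" using Dj j2 by (simp add: D_def)
  have lf: "length f = j" using jn j2 n_def by (simp add: f_def)
  have bf: "bits f" using bits_take[OF bd] by (simp add: f_def)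
  have hf: "hd f = 1" using j2 dne dp(3) by (cases d) (auto simp: f_def take_Cons')
  have lastf: "last f = 0" by (simp add: f_def)
  have tkd: "take j d = take (j - 1) d @ [1]"
  proof -
    have "Suc (j - 1) = j" using j2 by simp
    then have "take j d = take (j - 1) d @ [d ! (j - 1)]"
      using take_Suc_conv_app_nth[of "j - 1" d] jn j2 n_def by simp
    then show ?thesis using dj1 by simp
  qed
  have "take p a = bw M w (take (Suc j) D)"
    using bw_take[OF wp(1), of j M D] pk by (simp add: a_def q_def mult.commute)
  also have "\<dots> = bw M w (0 # take (j - 1) d @ [1])" using tkd by (simp add: D_def)
  also have "\<dots> = wplus (bw M w (0 # take (j - 1) d @ [0]))" using bw_wplus[OF wp(1,2)] by simp
  finally have tpa: "take p a = wplus (bw M w (0 # f))" by (simp add: f_def)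
  have "take p a = wplus c" using ac cp(1) p_def by simp
  then have "wplus c = wplus (bw M w (0 # f))" using tpa by simp
  moreover have "length c = length (bw M w (0 # f))" using bw_length[OF wp(1)] lf pk p_def q_def
    by (simp add: mult.commute)
  ultimately have ceq: "c = bw M w (0 # f)" using wplus_inj cp(1) by blast
  have ff: "fundamental 1 f"
    using rev_closure[OF w bf hf lastf] lf j2 c ceq by simp
  show ?thesis using ff ceq bf hf by (intro exI[of _ f]) (auto simp: f_def)
qed

section \<open>Associativity\<close>

lemma bits_blk1:
  assumes "bits x" "x \<noteq> []" "last x = 0"
  shows "bits (blk 1 x s b)"
proof -
  have "set (blk 1 x s b) \<subseteq> {0..1}" using blk_set[of x 1 s b] assms by (simp add: bits_def)
  then show ?thesis by (simp add: bits_def)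
qed

lemma bits_bw1:
  assumes "bits x" "x \<noteq> []" "last x = 0"
  shows "bits (bw 1 x D)"
proof -
  have "set (bw 1 x D) \<subseteq> {0..1}" using bw_set[of x 1 D] assms by (simp add: bits_def)
  then show ?thesis by (simp add: bits_def)
qed

lemma last_blk1:
  assumes "bits x" "x \<noteq> []" "last x = 0" "b \<le> 1"
  shows "last (blk 1 x s b) = b"
  using assms last_wplus[OF assms(2)] wplus_ne[OF assms(2)]
  by (auto simp: blk_def wbar_def last_map)

lemma blk_comp:
  assumes w: "w \<noteq> []" "set w \<subseteq> {0..M}" "last w < M"
    and x: "bits x" "x \<noteq> []" "last x = 0"
    and sb: "s \<le> 1" "b \<le> 1"
  shows "blk M (bw M w (0 # x)) s b = bw M w (s # blk 1 x s b)"
proof -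
  obtain x' where x': "x = x' @ [0]" using x(2,3) by (cases x rule: rev_cases) auto
  have wpx: "wplus x = x' @ [1]" using x' by simp
  have wpW: "wplus (bw M w (0 # x)) = bw M w (0 # wplus x)"
    using bw_wplus[OF w(1,3), of 0 x'] x' wpx by simp
  have bx: "bits (0 # x)" "bits (0 # wplus x)" using x wpx x' by auto
  have fl: "flip x = wbar 1 x" "flip (wplus x) = wbar 1 (wplus x)" by (simp_all add: wbar_def flip_def)
  show ?thesis
  proof (cases "s = 0")
    case True
    then show ?thesis using wpW by (cases "b = 0") (simp_all add: blk_def)
  next
    case False
    then have s1: "s = 1" using sb by simp
    show ?thesis
    proof (cases "b = 0")
      case True
      have "wbar M (wplus (bw M w (0 # x))) = bw M w (1 # flip (wplus x))"
        using wpW bw_bar[OF w bx(2)] by simp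
      then show ?thesis using s1 True fl by (simp add: blk_def)
    next
      case False
      have "wbar M (bw M w (0 # x)) = bw M w (1 # flip x)"
        using bw_bar[OF w bx(1)] by simp
      then show ?thesis using s1 False fl by (simp add: blk_def)
    qed
  qed
qed

lemma bw_assoc:
  assumes w: "w \<noteq> []" "set w \<subseteq> {0..M}" "last w < M"
    and x: "bits x" "x \<noteq> []" "last x = 0"
  shows "bits (s # y) \<Longrightarrow> bw M (bw M w (0 # x)) (s # y) = bw M w (s # bw 1 x (s # y))"
proof (induction y arbitrary: s)
  case Nil then show ?case by simp
next
  case (Cons b y)
  have sb: "s \<le> 1" "b \<le> 1" using Cons.prems by auto
  have "bw M (bw M w (0 # x)) (s # b # y) = blk M (bw M w (0 # x)) s b @ bw M (bw M w (0 # x)) (b # y)"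
    by simp
  also have "\<dots> = bw M w (s # blk 1 x s b) @ bw M w (b # bw 1 x (b # y))"
    using blk_comp[OF w x sb] Cons by simp
  also have "\<dots> = bw M w (s # blk 1 x s b @ bw 1 x (b # y))"
    using bw_append[of "blk 1 x s b" M w s "bw 1 x (b # y)"] last_blk1[OF x sb(2)] x(2) by simp
  finally show ?case by simp
qed

lemma fund_bits: "fundamental 1 x \<Longrightarrow> bits x \<and> x \<noteq> [] \<and> hd x = 1 \<and> last x = 0 \<and> 2 \<le> length x"
  using fund1_props[of x] by (auto simp: bits_def)

lemma comp_bw1:
  assumes "fundamental 1 x" "fundamental 1 y"
  shows "comp 1 x y = bw 1 x (0 # y)" "bits (comp 1 x y)" "comp 1 x y \<noteq> []" "hd (comp 1 x y) = 1"
proof -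
  note xp = fund_bits[OF assms(1)]
  note yp = fund_bits[OF assms(2)]
  show e: "comp 1 x y = bw 1 x (0 # y)" using comp_eq yp by blast
  show "bits (comp 1 x y)" using e bits_bw1 xp by simp
  have "comp 1 x y = wplus x @ bw 1 x y" using e bw0_first xp yp by simp
  moreover have "hd (wplus x) = 1" using hd_wplus[of x] xp by simp
  moreover have "wplus x \<noteq> []" using wplus_ne xp by simp
  ultimately show "comp 1 x y \<noteq> []" "hd (comp 1 x y) = 1" by simp_all
qed

lemma comp_assoc:
  assumes c: "fundamental M c" and x: "fundamental 1 x" and y: "fundamental 1 y"
  shows "comp M (comp M c x) y = comp M c (comp 1 x y)"
proof -
  note cp = fund_props[OF c]
  note xp = fund_bits[OF x]
  note yp = fund_bits[OF y]
  note cxy = comp_bw1[OF x y]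
  have "comp M (comp M c x) y = bw M (bw M c (0 # x)) (0 # y)"
    using comp_eq[of x M c] comp_eq[of y M "comp M c x"] xp yp by simp
  also have "\<dots> = bw M c (0 # bw 1 x (0 # y))"
    using bw_assoc[OF cp(1,6,2), of x 0 y] xp yp by simp
  also have "\<dots> = comp M c (comp 1 x y)" using comp_eq[of "comp 1 x y" M c] cxy by simp
  finally show ?thesis .
qed

lemma foldl_fund:
  "fundamental M c \<Longrightarrow> \<forall>t\<in>set ts. fundamental 1 t \<Longrightarrow> fundamental M (foldl (comp M) c ts)"
proof (induction ts arbitrary: c)
  case (Cons t ts)
  have "fundamental M (comp M c t)" using closure[of M c t] Cons.prems by simp
  then show ?case using Cons.IH Cons.prems by simp
qed simp

lemma foldl_assoc:
  "fundamental M c \<Longrightarrow> fundamental 1 t \<Longrightarrow> \<forall>s\<in>set ts. fundamental 1 s \<Longrightarrow>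
    foldl (comp M) (comp M c t) ts = comp M c (foldl (comp 1) t ts)"
proof (induction ts arbitrary: t)
  case Nil then show ?case by simp
next
  case (Cons s ts)
  have "foldl (comp M) (comp M c t) (s # ts) = foldl (comp M) (comp M c (comp 1 t s)) ts"
    using comp_assoc[OF Cons.prems(1,2)] Cons.prems(3) by simp
  also have "\<dots> = comp M c (foldl (comp 1) (comp 1 t s) ts)"
    using Cons.IH[of "comp 1 t s"] Cons.prems closure[of 1 t s] by simp
  finally show ?case by simp
qed

lemma comp_length:
  assumes "fundamental M c" "fundamental 1 d"
  shows "length (comp M c d) = length c * length d"
  using comp_eq[of d M c] fund_bits[OF assms(2)] bw_length[of c M "0 # d"] fund_props(1)[OF assms(1)]
  by simp

lemma comp_head:
  assumes "fundamental M c" "fundamental 1 d"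
  shows "take (length c) (comp M c d) = wplus c"
  using comp_eq[of d M c] fund_bits[OF assms(2)] bw0_first[of c d M] fund_props(1)[OF assms(1)]
    wplus_length[of c] by simp

lemma comp_inj:
  assumes "fundamental M c" "fundamental 1 d" "fundamental 1 d'" "comp M c d = comp M c d'"
  shows "d = d'"
proof -
  note cp = fund_props[OF assms(1)]
  note dp = fund_bits[OF assms(2)]
  note dp' = fund_bits[OF assms(3)]
  have "length c * length d = length c * length d'"
    using comp_length[OF assms(1,2)] comp_length[OF assms(1,3)] assms(4) by metis
  then have l: "length d = length d'" using cp(1) by simp
  have "bw M c (0 # d) = bw M c (0 # d')" using assms(4) comp_eq dp dp' by metis
  then show ?thesis using bw_eq_iff[OF cp(1,6,2) l] dp dp' by simp
qed

definition dec :: "nat \<Rightarrow> nat list \<Rightarrow> nat list list \<Rightarrow> bool" where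
  "dec M a cs \<longleftrightarrow> cs \<noteq> [] \<and>
           fundamental M (hd cs) \<and>
           (\<forall>c\<in>set (tl cs). fundamental 1 c) \<and>
           irreducible_word M (hd cs) \<and>
           (\<forall>c\<in>set (tl cs). irreducible_word 1 c) \<and>
           a = comp_iter M (hd cs) (tl cs)"

lemma dec_tail:
  assumes "\<forall>c\<in>set T. fundamental 1 c" "\<forall>c\<in>set T. irreducible_word 1 c" "T \<noteq> []"
  shows "dec 1 (foldl (comp 1) (hd T) (tl T)) T"
  using assms by (cases T) (auto simp: dec_def comp_iter_def)

lemma split_comp:
  assumes "fundamental M c" "\<forall>t\<in>set T. fundamental 1 t" "T \<noteq> []"
  shows "foldl (comp M) c T = comp M c (foldl (comp 1) (hd T) (tl T))"
    "fundamental 1 (foldl (comp 1) (hd T) (tl T))"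
proof -
  obtain t T' where T: "T = t # T'" using assms(3) by (cases T) auto
  show "foldl (comp M) c T = comp M c (foldl (comp 1) (hd T) (tl T))"
    using foldl_assoc[OF assms(1), of t T'] assms(2) T by simp
  show "fundamental 1 (foldl (comp 1) (hd T) (tl T))"
    using foldl_fund[of 1 t T'] assms(2) T by simp
qed

lemma shorter:
  assumes "fundamental M c" "fundamental 1 d"
  shows "length d \<le> length (comp M c d)" "length c < length (comp M c d)"
    "M = 1 \<Longrightarrow> length d < length (comp M c d)"
proof -
  have l: "length (comp M c d) = length c * length d" using comp_length[OF assms] .
  have c1: "1 \<le> length c" using fund_props(1)[OF assms(1)] by (cases c) auto
  have d2: "2 \<le> length d" using fund1_props(2)[OF assms(2)] .
  show "length d \<le> length (comp M c d)" using l c1 by simp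
  have "length c * 2 \<le> length c * length d" using d2 by (rule mult_le_mono2)
  then show "length c < length (comp M c d)" using l c1 by linarith
  assume "M = 1"
  then have "2 \<le> length c" using fund1_props(2) assms(1) by simp
  then have "2 * length d \<le> length c * length d" by (rule mult_le_mono1)
  then show "length d < length (comp M c d)" using l d2 by linarith
qed

lemma exist: "fundamental M a \<Longrightarrow> \<exists>cs. dec M a cs"
proof (induction "2 * length a + (if M = 1 then 0 else 1)" arbitrary: M a rule: less_induct)
  case less
  show ?case
  proof (cases "irreducible_word M a")
    case True
    then show ?thesis using less.prems by (intro exI[of _ "[a]"]) (simp add: dec_def comp_iter_def)
  next
    case False
    then obtain c d where cd: "fundamental M c" "fundamental 1 d" "a = comp M c d"
      using less.prems by (auto simp: irreducible_word_def)
    note sh = shorter[OF cd(1,2)]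
    have "2 * length c + (if M = 1 then 0 else 1) < 2 * length a + (if M = 1 then 0 else 1)"
      using sh(2) cd(3) by simp
    then obtain cs1 where cs1: "dec M c cs1" using less.hyps cd(1) by blast
    have "2 * length d + (if (1::nat) = 1 then 0 else 1) < 2 * length a + (if M = 1 then 0 else 1)"
      using sh(1,3) cd(3) by (cases "M = 1") auto
    then obtain cs2 where cs2: "dec 1 d cs2" using less.hyps[of d 1] cd(2) by blast
    define C where "C = foldl (comp M) (hd cs1) (tl cs1)"
    have C: "c = C" "fundamental M C" using cs1 cd(1) by (auto simp: dec_def comp_iter_def C_def)
    have dd: "d = foldl (comp 1) (hd cs2) (tl cs2)" using cs2 by (simp add: dec_def comp_iter_def)
    have cs2ne: "cs2 \<noteq> []" using cs2 by (simp add: dec_def)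
    have all2: "\<forall>t\<in>set cs2. fundamental 1 t" "\<forall>t\<in>set cs2. irreducible_word 1 t"
      using cs2 cs2ne by (cases cs2; simp add: dec_def)+
    have "a = comp M C (foldl (comp 1) (hd cs2) (tl cs2))" using cd(3) C dd by simp
    also have "\<dots> = foldl (comp M) C cs2" using split_comp(1)[OF C(2) all2(1) cs2ne] by simp
    also have "\<dots> = foldl (comp M) (hd cs1) (tl cs1 @ cs2)" by (simp add: C_def)
    finally have aeq: "a = foldl (comp M) (hd cs1) (tl cs1 @ cs2)" .
    have cs1ne: "cs1 \<noteq> []" using cs1 by (simp add: dec_def)
    have "dec M a (cs1 @ cs2)"
      using cs1 cs1ne all2 aeq by (auto simp: dec_def comp_iter_def)
    then show ?thesis by blast
  qed
qed

lemma uniq: "dec M a cs \<Longrightarrow> dec M a cs' \<Longrightarrow> cs = cs'"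
proof (induction "2 * length a + (if M = 1 then 0 else 1)" arbitrary: M a cs cs' rule: less_induct)
  case less
  obtain c T where cs: "cs = c # T" using less.prems(1) by (cases cs) (auto simp: dec_def)
  obtain c' T' where cs': "cs' = c' # T'" using less.prems(2) by (cases cs') (auto simp: dec_def)
  have p: "fundamental M c" "irreducible_word M c" "\<forall>t\<in>set T. fundamental 1 t"
    "\<forall>t\<in>set T. irreducible_word 1 t" "a = foldl (comp M) c T"
    using less.prems(1) cs by (auto simp: dec_def comp_iter_def)
  have p': "fundamental M c'" "irreducible_word M c'" "\<forall>t\<in>set T'. fundamental 1 t"
    "\<forall>t\<in>set T'. irreducible_word 1 t" "a = foldl (comp M) c' T'"
    using less.prems(2) cs' by (auto simp: dec_def comp_iter_def)
  show ?case
  proof (cases "T = []")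
    case T: True
    show ?thesis
    proof (cases "T' = []")
      case True then show ?thesis using T p(5) p'(5) cs cs' by simp
    next
      case False
      have "a = comp M c' (foldl (comp 1) (hd T') (tl T'))"
        using split_comp(1)[OF p'(1,3) False] p'(5) by simp
      moreover have "irreducible_word M a" using p(2,5) T by simp
      ultimately show ?thesis using split_comp(2)[OF p'(1,3) False] p'(1)
        by (auto simp: irreducible_word_def)
    qed
  next
    case T: False
    show ?thesis
    proof (cases "T' = []")
      case True
      have "a = comp M c (foldl (comp 1) (hd T) (tl T))"
        using split_comp(1)[OF p(1,3) T] p(5) by simp
      moreover have "irreducible_word M a" using p'(2,5) True by simp
      ultimately show ?thesis using split_comp(2)[OF p(1,3) T] p(1)
        by (auto simp: irreducible_word_def)
    next
      case T': False
      define D where "D = foldl (comp 1) (hd T) (tl T)"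
      define D' where "D' = foldl (comp 1) (hd T') (tl T')"
      have aD: "a = comp M c D" "fundamental 1 D"
        using split_comp[OF p(1,3) T] p(5) by (simp_all add: D_def)
      have aD': "a = comp M c' D'" "fundamental 1 D'"
        using split_comp[OF p'(1,3) T'] p'(5) by (simp_all add: D'_def)
      have bwD: "a = bw M c (0 # D)" using aD comp_eq fund_bits[OF aD(2)] by metis
      have bwD': "a = bw M c' (0 # D')" using aD' comp_eq fund_bits[OF aD'(2)] by metis
      have notlt: False if lt: "length c1 < length c2"
        and fc: "fundamental M c1" "fundamental M c2" "irreducible_word M c2"
        and fD: "fundamental 1 D1" "fundamental 1 D2" and eqb: "bw M c1 (0 # D1) = bw M c2 (0 # D2)"
        for c1 c2 D1 D2 :: "nat list"
      proof -
        obtain f where f: "fundamental 1 f" "c2 = bw M c1 (0 # f)" "bits f" "f \<noteq> []" "hd f = 1"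
          using key_lemma[OF fc(1) fD(1) fc(2) fD(2) eqb lt] by blast
        have "c2 = comp M c1 f" using f comp_eq by metis
        then show False using fc(1,3) f(1) by (auto simp: irreducible_word_def)
      qed
      have lc: "length c = length c'"
      proof (rule ccontr)
        assume "length c \<noteq> length c'"
        then have "length c < length c' \<or> length c' < length c" by auto
        then show False
        proof
          assume "length c < length c'"
          then show False using notlt[of c c' D D'] p(1) p'(1,2) aD(2) aD'(2) bwD bwD' by simp
        next
          assume "length c' < length c"
          then show False using notlt[of c' c D' D] p(1,2) p'(1) aD(2) aD'(2) bwD bwD' by simp
        qed
      qed
      have "wplus c = wplus c'"
        using comp_head[OF p(1) aD(2)] comp_head[OF p'(1) aD'(2)] aD(1) aD'(1) lc by simp
      then have cc: "c = c'" using wplus_inj[OF lc] fund_props(1)[OF p(1)] by blast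
      have DD: "D = D'" using comp_inj[OF p(1) aD(2), of D'] aD'(2) aD(1) aD'(1) cc by simp
      have dT: "dec 1 D T" using dec_tail[OF p(3,4) T] by (simp add: D_def)
      have dT': "dec 1 D T'" using dec_tail[OF p'(3,4) T'] DD by (simp add: D'_def)
      have "2 * length D + (if (1::nat) = 1 then 0 else 1) < 2 * length a + (if M = 1 then 0 else 1)"
        using shorter(1,3)[OF p(1) aD(2)] aD(1) by (cases "M = 1") auto
      then have "T = T'" using less.hyps[of D 1 T T'] dT dT' by blast
      then show ?thesis using cs cs' cc by simp
    qed
  qed
qed

theorem proposition2p17:
  fixes M :: nat and a :: "nat list"
  assumes "1 \<le> M" and "fundamental M a"
  shows "\<exists>!cs. cs \<noteq> [] \<and>
           fundamental M (hd cs) \<and>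
           (\<forall>c\<in>set (tl cs). fundamental 1 c) \<and>
           irreducible_word M (hd cs) \<and>
           (\<forall>c\<in>set (tl cs). irreducible_word 1 c) \<and>
           a = comp_iter M (hd cs) (tl cs)"
proof -
  obtain cs where cs: "dec M a cs" using exist[OF assms(2)] by blast
  have "\<exists>!cs. dec M a cs" using cs uniq by blast
  then show ?thesis by (simp add: dec_def)
qed

end
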